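(* Let $\mathbb{X},\mathbb{Y}$ be finite-dimensional real polyhedral Banach spaces with $\dim\mathbb{X}=m$, $\dim\mathbb{Y}=n$, and let $T\in\mathbb{L}(\mathbb{X},\mathbb{Y})$ with $\|T\|=1$. Then $T$ is an extreme contraction if and only if $i_{M_T}(T)=mn$.
   Context: A finite-dimensional Banach space is polyhedral if its closed unit ball has finitely many extreme points. $T$ is an extreme contraction if it is an extreme point of the closed unit ball of $\mathbb{L}(\mathbb{X},\mathbb{Y})$. $S_{\mathbb{X}}$, $B_{\mathbb{X}}$: unit sphere and unit ball; $\operatorname{Ext}(C)$: extreme points; $M_T=\{x\in S_{\mathbb{X}}:\|Tx\|=\|T\|\}$; $J(z)=\{f\in\mathbb{Z}^*:\|f\|=1,f(z)=1\}$ for a unit vector $z$. Index of smoothness: let $T\in\mathbb{L}(\mathbb{X},\mathbb{Y})$, $\|T\|=1$, $R\subset S_{\mathbb{X}}$ with $R\cap\operatorname{Ext}(B_{\mathbb{X}})\neq\emptyset$ and $\operatorname{span}R$ finite-dimensional, and suppose $\mathbb{W}:=\operatorname{span}\{y^*\in J(Tv): v\in R\cap\operatorname{Ext}(B_{\mathbb{X}})\}\subset\mathbb{Y}^*$ is finite-dimensional. Fix a basis $v_1,\dots,v_n$ of $\operatorname{span}R$ and a basis $y_1^*,\dots,y_p^*$ of $\mathbb{W}$. For $\alpha\in\mathbb{K}^n,\beta\in\mathbb{K}^p$ let $((\alpha_i\beta_j))\in\mathbb{K}^{np}$ denote the tuple $(\alpha_1\beta_1,\dots,\alpha_1\beta_p,\alpha_2\beta_1,\dots,\alpha_2\beta_p,\dots,\alpha_n\beta_1,\dots,\alpha_n\beta_p)$.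 Then $i_R(T):=\dim Z$, where $Z=\operatorname{span}\{((\alpha_i\beta_j)):\ \sum_{i=1}^n\alpha_iv_i\in R\cap\operatorname{Ext}(B_{\mathbb{X}}),\ \sum_{j=1}^p\beta_jy_j^*\in\operatorname{Ext}(J(\sum_{i=1}^n\alpha_iTv_i))\}\subset\mathbb{K}^{np}$; this number is independent of the chosen bases. *)

theory Defs
  imports "HOL-Analysis.Analysis" "HOL-Library.Function_Algebras"
begin

definition fin_dim_space :: "'a::real_vector itself \<Rightarrow> bool" where
  "fin_dim_space _ \<longleftrightarrow> (\<exists>B::'a set. finite B \<and> span B = UNIV)"

definition ext_ball :: "'a::real_normed_vector set" where
  "ext_ball = {x. x extreme_point_of cball 0 1}"

definition polyhedral :: "'a::real_normed_vector itself \<Rightarrow> bool" where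
  "polyhedral _ \<longleftrightarrow> finite (ext_ball :: 'a set)"

definition supp_fun :: "'b::real_normed_vector \<Rightarrow> ('b \<Rightarrow>\<^sub>L real) set" where
  "supp_fun z = {f. norm f = 1 \<and> blinfun_apply f z = 1}"

definition norm_attain :: "('a::real_normed_vector \<Rightarrow>\<^sub>L 'b::real_normed_vector) \<Rightarrow> 'a set" where
  "norm_attain T = {x. norm x = 1 \<and> norm (blinfun_apply T x) = norm T}"

definition extreme_contraction :: "('a::real_normed_vector \<Rightarrow>\<^sub>L 'b::real_normed_vector) \<Rightarrow> bool" where
  "extreme_contraction T \<longleftrightarrow> T extreme_point_of cball 0 1"

definition W_space :: "'a::real_normed_vector set \<Rightarrow> ('a \<Rightarrow>\<^sub>L 'b::real_normed_vector) \<Rightarrow> ('b \<Rightarrow>\<^sub>L real) set" where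
  "W_space R T = span (\<Union>v \<in> R \<inter> ext_ball. supp_fun (blinfun_apply T v))"

definition is_basis_list :: "'a::real_vector list \<Rightarrow> 'a set \<Rightarrow> bool" where
  "is_basis_list vs V \<longleftrightarrow> distinct vs \<and> independent (set vs) \<and> span (set vs) = V"

(* the tuple ((alpha_i beta_j)) in K^{np}, represented as a function on index pairs
   (i,j) with i < n, j < p, and 0 outside *)
definition tensor_tuple :: "nat \<Rightarrow> nat \<Rightarrow> (nat \<Rightarrow> real) \<Rightarrow> (nat \<Rightarrow> real) \<Rightarrow> (nat \<times> nat \<Rightarrow> real)" where
  "tensor_tuple n p \<alpha> \<beta> = (\<lambda>(i,j). if i < n \<and> j < p then \<alpha> i * \<beta> j else 0)"

definition scale_tuple :: "real \<Rightarrow> (nat \<times> nat \<Rightarrow> real) \<Rightarrow> (nat \<times> nat \<Rightarrow> real)" where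
  "scale_tuple c f = (\<lambda>x. c * f x)"

definition Z_space ::
  "'a::real_normed_vector list \<Rightarrow> ('b::real_normed_vector \<Rightarrow>\<^sub>L real) list \<Rightarrow> 'a set \<Rightarrow> ('a \<Rightarrow>\<^sub>L 'b) \<Rightarrow> (nat \<times> nat \<Rightarrow> real) set" where
  "Z_space vs ys R T = module.span scale_tuple
     {tensor_tuple (length vs) (length ys) \<alpha> \<beta> | \<alpha> \<beta>.
        (\<Sum>i<length vs. \<alpha> i *\<^sub>R vs ! i) \<in> R \<inter> ext_ball \<and>
        (\<Sum>j<length ys. \<beta> j *\<^sub>R ys ! j) \<in>
           {f. f extreme_point_of supp_fun (blinfun_apply T (\<Sum>i<length vs. \<alpha> i *\<^sub>R vs ! i))}}"

definition smooth_index :: "'a::real_normed_vector set \<Rightarrow> ('a \<Rightarrow>\<^sub>L 'b::real_normed_vector) \<Rightarrow> nat" where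
  "smooth_index R T =
     (let vs = (SOME vs. is_basis_list vs (span R));
          ys = (SOME ys. is_basis_list ys (W_space R T))
      in vector_space.dim scale_tuple (Z_space vs ys R T))"

end

theory Submission
  imports Defs
begin

lemma compact_PiE_fun:
  fixes S :: "'i \<Rightarrow> real set"
  assumes "\<And>i. compact (S i)"
  shows "compact (PiE UNIV S)"
proof -
  have "compactin (product_topology (\<lambda>i. euclidean) UNIV) (PiE UNIV S)"
    using assms by (simp add: compactin_PiE compactin_euclidean_iff)
  then show ?thesis
    by (simp add: euclidean_product_topology compactin_euclidean_iff)
qed

lemma fin_basis:
  assumes "fin_dim_space TYPE('c)"
  obtains B :: "'c::real_normed_vector set" where "finite B" "independent B" "span B = UNIV"
proof -
  obtain B0 :: "'c set" where B0: "finite B0" "span B0 = UNIV"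
    using assms unfolding fin_dim_space_def by blast
  obtain B :: "'c set" where B: "B \<subseteq> UNIV" "independent B" "UNIV \<subseteq> span B" "card B = dim (UNIV::'c set)"
    by (rule real_vector.basis_exists)
  have "finite B" using real_vector.independent_span_bound[OF B0(1) B(2)] B0(2) by auto
  then show ?thesis using that B by auto
qed

lemma rep_outside:
  fixes B :: "'c::real_normed_vector set"
  assumes "b \<notin> B" shows "representation B x b = 0"
  using assms real_vector.representation_ne_zero by blast

lemma rep_sum:
  fixes B :: "'c::real_normed_vector set"
  assumes "finite B" "independent B" "span B = UNIV"
  shows "(\<Sum>b\<in>B. representation B x b *\<^sub>R b) = x"
  using real_vector.sum_representation_eq[of B x B] assms by auto

lemma coord_bound:
  fixes B :: "'c::real_normed_vector set"
  assumes fB: "finite B" and iB: "independent B" and sB: "span B = UNIV"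
  shows "\<exists>K>0. \<forall>x b. \<bar>representation B x b\<bar> \<le> K * norm x"
proof (cases "B = {}")
  case True
  then show ?thesis by (intro exI[of _ 1]) (simp add: rep_outside)
next
  case False
  define \<Phi> where "\<Phi> c = (\<Sum>b\<in>B. c b *\<^sub>R b)" for c :: "'c \<Rightarrow> real"
  have cc: "continuous_on A (\<lambda>c::'c\<Rightarrow>real. c b)" for A b
    by (rule continuous_on_subset[OF continuous_on_product_coordinates]) simp
  have contP: "continuous_on A \<Phi>" for A
    unfolding \<Phi>_def by (intro continuous_intros cc)
  define Q where "Q = PiE UNIV (\<lambda>b. if b \<in> B then {-1..1::real} else {0})"
  have cQ: "compact Q" unfolding Q_def by (rule compact_PiE_fun) auto
  define C where "C = (\<Union>b\<in>B. {c::'c\<Rightarrow>real. \<bar>c b\<bar> = 1})"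
  have "closed C" unfolding C_def
  proof (intro closed_UN fB ballI)
    fix b assume "b \<in> B"
    show "closed {c::'c\<Rightarrow>real. \<bar>c b\<bar> = 1}"
      by (rule closed_Collect_eq) (intro continuous_intros cc, simp)
  qed
  define S where "S = Q \<inter> C"
  have cS: "compact S" unfolding S_def using cQ \<open>closed C\<close> by (rule compact_Int_closed)
  obtain b0 where b0: "b0 \<in> B" using False by blast
  have "(\<lambda>b. if b = b0 then 1 else 0) \<in> S"
    unfolding S_def Q_def C_def using b0 by auto
  then have "S \<noteq> {}" by blast
  have "continuous_on S (\<lambda>c. norm (\<Phi> c))" by (intro continuous_intros contP)
  then obtain c0 where c0: "c0 \<in> S" and c0min: "\<And>c. c \<in> S \<Longrightarrow> norm (\<Phi> c0) \<le> norm (\<Phi> c)"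
    using continuous_attains_inf[OF cS \<open>S \<noteq> {}\<close>] by metis
  define \<mu> where "\<mu> = norm (\<Phi> c0)"
  have "\<mu> > 0"
  proof (rule ccontr)
    assume "\<not> \<mu> > 0"
    then have "\<Phi> c0 = 0" unfolding \<mu>_def by simp
    moreover obtain b1 where "b1 \<in> B" "\<bar>c0 b1\<bar> = 1" using c0 unfolding S_def C_def by blast
    ultimately have "real_vector.dependent B"
      using real_vector.dependent_finite[OF fB, of] unfolding \<Phi>_def
      by (metis (no_types, lifting) \<open>b1 \<in> B\<close> \<open>\<bar>c0 b1\<bar> = 1\<close> \<open>\<Phi> c0 = 0\<close>[unfolded \<Phi>_def] abs_zero zero_neq_one)
    then show False using iB by blast
  qed
  show ?thesis
  proof (intro exI[of _ "1/\<mu>"] conjI allI)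
    show "1/\<mu> > 0" using \<open>\<mu> > 0\<close> by simp
    fix x b
    define c where "c = representation B x"
    define M where "M = Max ((\<lambda>b. \<bar>c b\<bar>) ` B)"
    have cM: "\<bar>c b'\<bar> \<le> M" if "b' \<in> B" for b'
      unfolding M_def using fB that by auto
    have M0: "M \<ge> 0" using cM[OF b0] by linarith
    show "\<bar>representation B x b\<bar> \<le> 1/\<mu> * norm x"
    proof (cases "b \<in> B")
      case False then show ?thesis using rep_outside[OF False] using \<open>\<mu> > 0\<close> by simp
    next
      case True
      show ?thesis
      proof (cases "M = 0")
        case True
        then show ?thesis using cM[OF \<open>b \<in> B\<close>] \<open>\<mu> > 0\<close> unfolding c_def by simp
      next
        case Mne: False
        then have Mp: "M > 0" using M0 by simp
        have "M \<in> (\<lambda>b. \<bar>c b\<bar>) ` B" unfolding M_def using fB b0 by (intro Max_in) auto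
        then obtain bm where bm: "bm \<in> B" "\<bar>c bm\<bar> = M" by blast

        define c' where "c' = (\<lambda>b. c b / M)"
        have "c' \<in> Q"


        proof -
          have "c' b \<in> (if b \<in> B then {-1..1} else {0})" for b
          proof (cases "b \<in> B")
            case True
            then have "\<bar>c b\<bar> / M \<le> 1" using cM[OF True] Mp by simp
            then have "\<bar>c' b\<bar> \<le> 1" unfolding c'_def using Mp by (simp add: abs_divide)
            then show ?thesis using True by (simp add: abs_le_iff)
          next
            case False
            then show ?thesis unfolding c'_def c_def by (simp add: rep_outside)
          qed
          then show ?thesis unfolding Q_def by (simp add: PiE_UNIV_domain)
        qed
        moreover have "c' \<in> C"
          unfolding C_def c'_def using bm Mp by (auto intro!: bexI[of _ bm])
        ultimately have "c' \<in> S" unfolding S_def by blast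
        then have "\<mu> \<le> norm (\<Phi> c')" using c0min unfolding \<mu>_def by blast
        also have "\<Phi> c' = (1/M) *\<^sub>R (\<Sum>b\<in>B. c b *\<^sub>R b)"
          unfolding \<Phi>_def c'_def scaleR_sum_right by (rule sum.cong) simp_all
        also have "\<dots> = (1/M) *\<^sub>R x" using rep_sum[OF fB iB sB, of x] by (simp add: c_def)


        finally have "\<mu> \<le> norm x / M" using Mp by simp
        then have "M \<le> norm x / \<mu>" using Mp \<open>\<mu> > 0\<close> by (simp add: field_simps)
        then show ?thesis using cM[OF True] unfolding c_def by simp
      qed
    qed
  qed
qed


locale fdb =
  fixes B :: "'c::real_normed_vector set"
  assumes fB: "finite B" and iB: "independent B" and sB: "span B = UNIV"
begin

lemma rep_add[simp]: "representation B (x + y) b = representation B x b + representation B y b"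
  using real_vector.representation_add[OF iB, of y x] sB by simp

lemma rep_diff[simp]: "representation B (x - y) b = representation B x b - representation B y b"
  using real_vector.representation_diff[OF iB, of y x] sB by simp

lemma rep_scale[simp]: "representation B (c *\<^sub>R x) b = c * representation B x b"
  using real_vector.representation_scale[OF iB, of x c] sB by simp

lemma rep_zero[simp]: "representation B 0 b = 0"
  by (simp add: real_vector.representation_zero)

lemma rep_minus[simp]: "representation B (- x) b = - representation B x b"
  using rep_diff[of 0 x b] by simp

lemma rep_sum_eq: "(\<Sum>b\<in>B. representation B x b *\<^sub>R b) = x"
  by (rule rep_sum[OF fB iB sB])

lemma rep_eq0: assumes "\<And>b. b \<in> B \<Longrightarrow> representation B x b = 0" shows "x = 0"
proof -
  have "x = (\<Sum>b\<in>B. representation B x b *\<^sub>R b)" by (simp add: rep_sum_eq)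
  also have "\<dots> = 0" using assms by simp
  finally show ?thesis .
qed

lemma rep_ext: assumes "\<And>b. b \<in> B \<Longrightarrow> representation B x b = representation B y b" shows "x = y"
  using rep_eq0[of "x - y"] assms by simp

lemma coordK: "\<exists>K>0. \<forall>x b. \<bar>representation B x b\<bar> \<le> K * norm x"
  by (rule coord_bound[OF fB iB sB])

lemma rep_bl: "bounded_linear (\<lambda>x. representation B x b)"
proof -
  from coordK obtain K where K0: "K > 0" and K1: "\<forall>x b. \<bar>representation B x b\<bar> \<le> K * norm x" by blast
  note K = K0 K1[rule_format]
  show ?thesis
    by (rule bounded_linear_intro[where K=K]) (use K(2) in \<open>auto simp: mult.commute\<close>)
qed

lemma rep_cont[continuous_intros]: "continuous_on S (\<lambda>x. representation B x b)"
  by (intro linear_continuous_on rep_bl)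

lemma lin_bounded:
  fixes f :: "'c \<Rightarrow> 'd::real_normed_vector"
  assumes "linear f" shows "bounded_linear f"
proof -
  from coordK obtain K where K0: "K > 0" and K1: "\<forall>x b. \<bar>representation B x b\<bar> \<le> K * norm x" by blast
  note K = K0 K1[rule_format]
  have eq: "f x = (\<Sum>b\<in>B. representation B x b *\<^sub>R f b)" for x
  proof -
    have "f x = f (\<Sum>b\<in>B. representation B x b *\<^sub>R b)" by (simp add: rep_sum_eq)
    also have "\<dots> = (\<Sum>b\<in>B. representation B x b *\<^sub>R f b)"
      using assms by (simp add: linear_sum linear_scale)
    finally show ?thesis .
  qed
  have "norm (f x) \<le> norm x * (K * (\<Sum>b\<in>B. norm (f b)))" for x
  proof -
    have "norm (f x) \<le> (\<Sum>b\<in>B. norm (representation B x b *\<^sub>R f b))"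
      by (subst eq) (rule norm_sum)
    also have "\<dots> \<le> (\<Sum>b\<in>B. (K * norm x) * norm (f b))"
      by (intro sum_mono) (simp add: mult_right_mono K(2))
    also have "\<dots> = norm x * (K * (\<Sum>b\<in>B. norm (f b)))"
      by (simp add: sum_distrib_left algebra_simps)
    finally show ?thesis .
  qed
  then show ?thesis
    using assms by (intro bounded_linear_intro[where K="K * (\<Sum>b\<in>B. norm (f b))"])
      (auto simp: linear_add linear_scale)
qed

lemma compact_cb:
  fixes S :: "'c set"
  assumes "closed S" "bounded S" shows "compact S"
proof -
  from coordK obtain K where K0: "K > 0" and K1: "\<forall>x b. \<bar>representation B x b\<bar> \<le> K * norm x" by blast
  note K = K0 K1[rule_format]
  obtain R where R: "\<And>x. x \<in> S \<Longrightarrow> norm x \<le> R"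
    using assms(2) unfolding bounded_iff by blast
  define \<Phi> where "\<Phi> c = (\<Sum>b\<in>B. c b *\<^sub>R b)" for c :: "'c \<Rightarrow> real"
  have cc: "continuous_on A (\<lambda>c::'c\<Rightarrow>real. c b)" for A b
    by (rule continuous_on_subset[OF continuous_on_product_coordinates]) simp
  have contP: "continuous_on A \<Phi>" for A
    unfolding \<Phi>_def by (intro continuous_intros cc)
  define Q where "Q = PiE UNIV (\<lambda>b. if b \<in> B then {-(K*R)..K*R} else {0})"
  have cQ: "compact Q" unfolding Q_def by (rule compact_PiE_fun) simp
  have "compact (\<Phi> ` Q)" by (rule compact_continuous_image[OF contP cQ])
  moreover have "S \<subseteq> \<Phi> ` Q"
  proof
    fix x assume x: "x \<in> S"
    have "representation B x \<in> Q"
    proof -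
      have "representation B x b \<in> (if b \<in> B then {-(K*R)..K*R} else {0})" for b
      proof (cases "b \<in> B")
        case True
        have "\<bar>representation B x b\<bar> \<le> K * R"
          using K(2)[of x b] R[OF x] K(1) by (meson mult_left_mono less_imp_le order_trans)
        then show ?thesis using True by (simp add: abs_le_iff)
      next
        case False then show ?thesis by (simp add: rep_outside)
      qed
      then show ?thesis unfolding Q_def by (simp add: PiE_UNIV_domain)
    qed
    moreover have "\<Phi> (representation B x) = x" unfolding \<Phi>_def by (rule rep_sum_eq)
    ultimately show "x \<in> \<Phi> ` Q" by (metis image_eqI)
  qed
  ultimately have "compact (\<Phi> ` Q \<inter> S)" using assms(1) by (intro compact_Int_closed)
  then show ?thesis using \<open>S \<subseteq> \<Phi> ` Q\<close> by (simp add: Int_absorb1)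
qed

definition q :: "'c \<Rightarrow> real" where "q x = (\<Sum>b\<in>B. (representation B x b)\<^sup>2)"
definition ip :: "'c \<Rightarrow> 'c \<Rightarrow> real" where "ip x y = (\<Sum>b\<in>B. representation B x b * representation B y b)"

lemma q_cont[continuous_intros]: "continuous_on S q"
  unfolding q_def by (intro continuous_intros)

lemma q_pos: "x \<noteq> 0 \<Longrightarrow> q x > 0"
proof -
  assume "x \<noteq> 0"
  then obtain b where b: "b \<in> B" "representation B x b \<noteq> 0" using rep_eq0 by blast
  have "(representation B x b)\<^sup>2 \<le> q x"
    unfolding q_def using b fB by (intro member_le_sum) auto
  moreover have "(representation B x b)\<^sup>2 > 0" using b by simp
  ultimately show "q x > 0" by linarith
qed

lemma q_nonneg: "q x \<ge> 0" unfolding q_def by (intro sum_nonneg) simp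

lemma q_comb: "q ((1 - u) *\<^sub>R a + u *\<^sub>R b) = (1-u) * q a + u * q b - u * (1-u) * q (a - b)"
  unfolding q_def by (simp add: sum_distrib_left sum_subtractf[symmetric] sum.distrib[symmetric])
     (intro sum.cong refl, simp add: power2_eq_square algebra_simps)

lemma q_shift: "q (x - t *\<^sub>R d) = q x - 2 * t * ip x d + t\<^sup>2 * q d"
  unfolding q_def ip_def by (simp add: sum_distrib_left sum_subtractf[symmetric] sum.distrib[symmetric])
     (intro sum.cong refl, simp add: power2_eq_square algebra_simps)

lemma ip_self: "ip x x = q x" unfolding ip_def q_def by (simp add: power2_eq_square)

lemma ip_linear: "linear (ip x)"
  unfolding ip_def by (intro linearI) (simp_all add: sum.distrib algebra_simps sum_distrib_left)

lemma ip_diff: "ip x (y - z) = ip x y - ip x z"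
  unfolding ip_def by (simp add: sum_subtractf algebra_simps)

end


context fdb begin

lemma rep_cont_comp[continuous_intros]:
  "continuous_on S f \<Longrightarrow> continuous_on S (\<lambda>x. representation B (f x) b)"
  by (rule bounded_linear.continuous_on[OF rep_bl])

lemma q_cont_comp[continuous_intros]: "continuous_on S f \<Longrightarrow> continuous_on S (\<lambda>x. q (f x))"
  unfolding q_def by (intro continuous_intros)

lemma max_extreme:
  fixes K :: "'c set" and \<phi> :: "'c \<Rightarrow> real"
  assumes cK: "compact K" and vK: "convex K" and nK: "K \<noteq> {}"
    and ct: "continuous_on K \<phi>" and cv: "convex_on K \<phi>"
  shows "\<exists>e. e extreme_point_of K \<and> (\<forall>x\<in>K. \<phi> x \<le> \<phi> e)"
proof -
  obtain x0 where x0: "x0 \<in> K" "\<forall>x\<in>K. \<phi> x \<le> \<phi> x0"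
    using continuous_attains_sup[OF cK nK ct] by blast
  define K' where "K' = K \<inter> \<phi> -` {\<phi> x0}"
  have "closed K'" unfolding K'_def
    by (rule continuous_closed_preimage[OF ct compact_imp_closed[OF cK] closed_singleton])
  then have cK': "compact K'" using compact_Int_closed[OF cK \<open>closed K'\<close>]
    by (simp add: K'_def Int_absorb)
  have "x0 \<in> K'" unfolding K'_def using x0 by simp
  then have nK': "K' \<noteq> {}" by blast
  have "continuous_on K' q" by (intro continuous_intros)
  then obtain e where e: "e \<in> K'" "\<forall>y\<in>K'. q y \<le> q e"
    using continuous_attains_sup[OF cK' nK'] by blast
  have eK: "e \<in> K" and ephi: "\<phi> e = \<phi> x0" using e(1) unfolding K'_def by auto
  have "e extreme_point_of K"
    unfolding extreme_point_of_def
  proof (intro conjI eK ballI notI)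
    fix a b assume a: "a \<in> K" and b: "b \<in> K" and "e \<in> open_segment a b"
    then obtain u where ab: "a \<noteq> b" and u: "0 < u" "u < 1" and eu: "e = (1 - u) *\<^sub>R a + u *\<^sub>R b"
      unfolding in_segment by blast
    have "\<phi> e \<le> (1 - u) * \<phi> a + u * \<phi> b"
      unfolding eu using convex_onD[OF cv, of u a b] u a b by simp
    moreover have "\<phi> a \<le> \<phi> x0" "\<phi> b \<le> \<phi> x0" using x0(2) a b by auto
    ultimately have h: "(1-u) * (\<phi> x0 - \<phi> a) + u * (\<phi> x0 - \<phi> b) \<le> 0"
      using ephi by (simp add: algebra_simps)
    have h1: "(1-u) * (\<phi> x0 - \<phi> a) \<ge> 0" "u * (\<phi> x0 - \<phi> b) \<ge> 0"
      using \<open>\<phi> a \<le> \<phi> x0\<close> \<open>\<phi> b \<le> \<phi> x0\<close> u by simp_all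
    then have "(1-u) * (\<phi> x0 - \<phi> a) = 0" "u * (\<phi> x0 - \<phi> b) = 0" using h by linarith+
    then have "\<phi> a = \<phi> x0 \<and> \<phi> b = \<phi> x0" using u by simp
    then have "a \<in> K'" "b \<in> K'" unfolding K'_def using a b by auto
    then have qa: "q a \<le> q e" and qb: "q b \<le> q e" using e(2) by auto
    have "q (a - b) > 0" using ab q_pos by simp
    then have "u * (1 - u) * q (a - b) > 0" using u by simp
    moreover have "q e = (1-u) * q a + u * q b - u * (1-u) * q (a - b)"
      unfolding eu by (rule q_comb)
    moreover have "(1-u) * q a + u * q b \<le> q e"
    proof -
      have "(1-u) * q a \<le> (1-u) * q e" "u * q b \<le> u * q e"
        using qa qb u by (simp_all add: mult_left_mono)
      then show ?thesis by (simp add: algebra_simps)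
    qed
    ultimately show False by linarith
  qed
  then show ?thesis using e(1) unfolding K'_def using x0(2) ephi by auto
qed

lemma separate:
  fixes K :: "'c set"
  assumes cK: "compact K" and vK: "convex K" and nK: "K \<noteq> {}" and w: "w \<notin> K"
  shows "\<exists>f::'c \<Rightarrow> real. bounded_linear f \<and> (\<forall>v\<in>K. f v < f w)"
proof -
  have "continuous_on K (\<lambda>v. q (w - v))" by (intro continuous_intros)
  then obtain p where p: "p \<in> K" "\<forall>v\<in>K. q (w - p) \<le> q (w - v)"
    using continuous_attains_inf[OF cK nK] by blast
  define f where "f = ip (w - p)"
  have bl: "bounded_linear f" unfolding f_def by (rule lin_bounded[OF ip_linear])
  have le: "f v \<le> f p" if v: "v \<in> K" for v
  proof (rule ccontr)
    assume "\<not> f v \<le> f p"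
    define d where "d = v - p"
    define D where "D = ip (w - p) d"
    have Dpos: "D > 0" using \<open>\<not> f v \<le> f p\<close> unfolding D_def d_def f_def ip_diff by simp
    define t where "t = min 1 (D / (q d + 1))"
    have qd: "q d \<ge> 0" by (rule q_nonneg)
    have t0: "t > 0" unfolding t_def using Dpos qd by simp
    have t1: "t \<le> 1" unfolding t_def by simp
    have "(1 - t) *\<^sub>R p + t *\<^sub>R v \<in> K"
      using convexD[OF vK p(1) v, of "1 - t" t] t0 t1 by simp
    then have "q (w - p) \<le> q (w - ((1 - t) *\<^sub>R p + t *\<^sub>R v))" using p(2) by blast
    also have "w - ((1 - t) *\<^sub>R p + t *\<^sub>R v) = (w - p) - t *\<^sub>R d"
      unfolding d_def by (simp add: algebra_simps)
    also have "q \<dots> = q (w - p) - 2 * t * D + t\<^sup>2 * q d"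
      unfolding D_def by (rule q_shift)
    finally have "2 * t * D \<le> t\<^sup>2 * q d" by simp
    then have "2 * D \<le> t * q d" using t0 by (simp add: power2_eq_square mult.assoc)
    moreover have "t * q d \<le> (D / (q d + 1)) * q d"
      unfolding t_def using qd by (intro mult_right_mono) auto
    moreover have "(D / (q d + 1)) * q d < D"
      using Dpos qd by (simp add: field_simps)
    ultimately show False using Dpos by linarith
  qed
  have "p \<noteq> w" using p(1) w by blast
  then have "q (w - p) > 0" using q_pos by simp
  then have "f p < f w" unfolding f_def using ip_diff[of "w - p" w p] ip_self[of "w - p"] by simp
  have "\<forall>v\<in>K. f v < f w"
  proof
    fix v assume "v \<in> K"
    show "f v < f w" using le[OF \<open>v \<in> K\<close>] \<open>f p < f w\<close> by linarith
  qed
  with bl show ?thesis by blast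
qed

end


lemma ext_norm1:
  fixes x :: "'c::real_normed_vector"
  assumes ex: "x extreme_point_of cball 0 1" and nt: "\<exists>v::'c. v \<noteq> 0"
  shows "norm x = 1"
proof (rule ccontr)
  assume ne: "norm x \<noteq> 1"
  have x1: "norm x \<le> 1" using ex unfolding extreme_point_of_def by simp
  then have lt: "norm x < 1" using ne by simp
  show False
  proof (cases "x = 0")
    case True
    obtain v :: 'c where "v \<noteq> 0" using nt by blast
    define u where "u = v /\<^sub>R norm v"
    have nu: "norm u = 1" using \<open>v \<noteq> 0\<close> unfolding u_def by simp
    have "u \<noteq> -u"
    proof
      assume "u = -u"
      then have "2 *\<^sub>R u = 0" by (metis add.right_inverse scaleR_2)
      then have "u = 0" by simp
      then show False using nu by simp
    qed
    then have "x \<in> open_segment u (-u)"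
      unfolding in_segment True by (intro conjI exI[of _ "1/2"]) (auto simp: algebra_simps)
    moreover have "u \<in> cball 0 1" "-u \<in> cball 0 1" using nu by auto
    ultimately show False using ex unfolding extreme_point_of_def by blast
  next
    case False
    define d where "d = (1 - norm x) / (2 * norm x)"
    have d0: "d > 0" unfolding d_def using lt False by simp
    define a where "a = (1 + d) *\<^sub>R x"
    define b where "b = (1 - d) *\<^sub>R x"
    have "norm a = (1 + d) * norm x" unfolding a_def using d0 by simp
    also have "\<dots> \<le> 1" unfolding d_def using False lt by (simp add: field_simps)
    finally have "a \<in> cball 0 1" by simp
    have "norm b = \<bar>1 - d\<bar> * norm x" unfolding b_def by simp
    also have "\<dots> \<le> (1 + d) * norm x" using d0 by (intro mult_right_mono) auto
    also have "\<dots> \<le> 1" unfolding d_def using False lt by (simp add: field_simps)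
    finally have "b \<in> cball 0 1" by simp
    have "a - b = (2*d) *\<^sub>R x" unfolding a_def b_def scaleR_diff_left[symmetric] by simp
    then have "a \<noteq> b" using d0 False by auto
    have "(1 - 1/2) *\<^sub>R a + (1/2::real) *\<^sub>R b = ((1/2)*(1+d) + (1/2)*(1-d)) *\<^sub>R x"
      unfolding a_def b_def scaleR_scaleR scaleR_add_left[symmetric] by simp
    also have "\<dots> = x"
    proof -
      have "(1/2)*(1+d) + (1/2)*(1-d) = (1::real)" by (simp add: field_simps)
      then show ?thesis by simp
    qed
    finally have "x \<in> open_segment a b"
      unfolding in_segment using \<open>a \<noteq> b\<close> by (intro conjI exI[of _ "1/2"]) auto
    then show False using ex \<open>a \<in> cball 0 1\<close> \<open>b \<in> cball 0 1\<close> unfolding extreme_point_of_def by blast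
  qed
qed

context fdb begin

lemma compact_ball1: "compact (cball (0::'c) 1)"
  by (rule compact_cb) auto

lemma opnorm_le1:
  fixes A :: "'c \<Rightarrow>\<^sub>L 'd::real_normed_vector"
  assumes "\<And>x. x extreme_point_of cball 0 1 \<Longrightarrow> norm (blinfun_apply A x) \<le> 1"
  shows "norm A \<le> 1"
proof -
  have cv: "convex_on (cball 0 1) (\<lambda>x. norm (blinfun_apply A x))"
  proof (rule convex_onI[OF _ convex_cball])
    fix t :: real and x y assume "0 < t" "t < 1"
    have "norm (blinfun_apply A ((1 - t) *\<^sub>R x + t *\<^sub>R y)) = norm ((1 - t) *\<^sub>R blinfun_apply A x + t *\<^sub>R blinfun_apply A y)"
      by (simp add: blinfun.add_right blinfun.scaleR_right)
    also have "\<dots> \<le> (1 - t) * norm (blinfun_apply A x) + t * norm (blinfun_apply A y)"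
      using \<open>0 < t\<close> \<open>t < 1\<close> by (metis norm_triangle_ineq norm_scaleR abs_of_pos diff_gt_0_iff_gt)
    finally show "norm (blinfun_apply A ((1 - t) *\<^sub>R x + t *\<^sub>R y)) \<le> (1 - t) * norm (blinfun_apply A x) + t * norm (blinfun_apply A y)" .
  qed
  have ct: "continuous_on (cball 0 1) (\<lambda>x. norm (blinfun_apply A x))" by (intro continuous_intros)
  obtain e where e: "e extreme_point_of cball 0 1" "\<forall>x\<in>cball 0 1. norm (blinfun_apply A x) \<le> norm (blinfun_apply A e)"
    using max_extreme[OF compact_ball1 convex_cball _ ct cv] by auto
  have bd: "norm (blinfun_apply A x) \<le> 1" if "norm x \<le> 1" for x
    using e(2) that assms[OF e(1)] by force
  show ?thesis
  proof (rule norm_blinfun_bound)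
    fix x
    show "norm (blinfun_apply A x) \<le> 1 * norm x"
    proof (cases "x = 0")
      case False
      have "norm (blinfun_apply A (x /\<^sub>R norm x)) \<le> 1" using False by (intro bd) simp
      then have "norm (blinfun_apply A x) / norm x \<le> 1" using False by (simp add: blinfun.scaleR_right divide_inverse mult.commute)
      then show ?thesis using False by (simp add: divide_le_eq)
    qed simp
  qed simp
qed

end


lemma extreme_subset:
  assumes "e extreme_point_of K" "e \<in> J" "J \<subseteq> K" shows "e extreme_point_of J"
  using assms unfolding extreme_point_of_def by blast

lemma extreme_neg:
  fixes x :: "'c::real_normed_vector"
  assumes "x extreme_point_of cball 0 1" shows "(-x) extreme_point_of cball 0 1"
  unfolding extreme_point_of_def
proof (intro conjI ballI notI)
  show "-x \<in> cball 0 1" using assms unfolding extreme_point_of_def by simp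
  fix a b assume a: "a \<in> cball (0::'c) 1" and b: "b \<in> cball (0::'c) 1" and "-x \<in> open_segment a b"
  then obtain u where "a \<noteq> b" "0 < u" "u < 1" "-x = (1 - u) *\<^sub>R a + u *\<^sub>R b"
    unfolding in_segment by blast
  then have "x \<in> open_segment (-a) (-b)"
    unfolding in_segment by (intro conjI exI[of _ u]) (auto simp: algebra_simps minus_equation_iff[of x])
  moreover have "-a \<in> cball 0 1" "-b \<in> cball 0 1" using a b by auto
  ultimately show False using assms unfolding extreme_point_of_def by blast
qed

lemma exists_fdb:
  assumes "fin_dim_space TYPE('c::real_normed_vector)"
  shows "\<exists>B::'c set. fdb B"
proof -
  obtain B :: "'c set" where "finite B" "independent B" "span B = UNIV"
    using fin_basis[OF assms] by metis
  then show ?thesis by (intro exI[of _ B]) (simp add: fdb_def)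
qed

lemma linear_convex_on: "bounded_linear f \<Longrightarrow> convex S \<Longrightarrow> convex_on S (f :: 'c::real_normed_vector \<Rightarrow> real)"
  by (rule convex_onI) (simp_all add: linear_add linear_scale bounded_linear.linear)

lemma bl_apply_left: "bounded_linear (\<lambda>g::'c::real_normed_vector \<Rightarrow>\<^sub>L 'd::real_normed_vector. blinfun_apply g u)"
  by (rule bounded_bilinear.bounded_linear_left[OF bounded_bilinear_blinfun_apply])

context fdb begin

lemma dual_fin: "fin_dim_space TYPE('c \<Rightarrow>\<^sub>L real)"
proof -
  define cb where "cb b = Blinfun (\<lambda>x. representation B x b)" for b
  have cb_apply: "blinfun_apply (cb b) x = representation B x b" for b x
    unfolding cb_def by (simp add: bounded_linear_Blinfun_apply[OF rep_bl])
  have "g \<in> span (cb ` B)" for g :: "'c \<Rightarrow>\<^sub>L real"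
  proof -
    have "g = (\<Sum>b\<in>B. blinfun_apply g b *\<^sub>R cb b)"
    proof (rule blinfun_eqI)
      fix x
      have "blinfun_apply g x = blinfun_apply g (\<Sum>b\<in>B. representation B x b *\<^sub>R b)"
        by (simp add: rep_sum_eq)
      also have "\<dots> = (\<Sum>b\<in>B. representation B x b * blinfun_apply g b)"
        by (simp add: blinfun.sum_right blinfun.scaleR_right)
      also have "\<dots> = blinfun_apply (\<Sum>b\<in>B. blinfun_apply g b *\<^sub>R cb b) x"
        by (simp add: blinfun.sum_left blinfun.scaleR_left cb_apply mult.commute)
      finally show "blinfun_apply g x = blinfun_apply (\<Sum>b\<in>B. blinfun_apply g b *\<^sub>R cb b) x" .
    qed
    also have "\<dots> \<in> span (cb ` B)"
      by (intro span_sum span_scale span_base) auto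
    finally show ?thesis .
  qed
  then have "span (cb ` B) = UNIV" by blast
  then show ?thesis unfolding fin_dim_space_def using fB by blast
qed

lemma norming:
  fixes w :: 'c
  shows "\<exists>g::'c \<Rightarrow>\<^sub>L real. norm g \<le> 1 \<and> blinfun_apply g w = norm w"
proof (cases "w = 0")
  case True then show ?thesis by (intro exI[of _ 0]) simp
next
  case False
  obtain B' :: "('c \<Rightarrow>\<^sub>L real) set" where "fdb B'" using exists_fdb[OF dual_fin] by blast
  interpret D: fdb B' by fact
  define u where "u = w /\<^sub>R norm w"
  have nu: "norm u = 1" unfolding u_def using False by simp
  have ct: "continuous_on (cball 0 1) (\<lambda>g::'c \<Rightarrow>\<^sub>L real. blinfun_apply g u)"
    by (rule linear_continuous_on[OF bl_apply_left])
  obtain g0 where g0: "g0 \<in> cball (0::'c \<Rightarrow>\<^sub>L real) 1" "\<forall>g\<in>cball 0 1. blinfun_apply g u \<le> blinfun_apply g0 u"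
    using continuous_attains_sup[OF D.compact_ball1 _ ct] by auto
  define M where "M = blinfun_apply g0 u"
  have lowb: "M \<ge> 1 / (1 + t)" if t: "t > 0" for t
  proof -
    have "(1 + t) *\<^sub>R u \<notin> cball 0 1" using nu t by simp
    then obtain f :: "'c \<Rightarrow> real" where bl: "bounded_linear f" and fl: "\<forall>v\<in>cball 0 1. f v < f ((1 + t) *\<^sub>R u)"
      using separate[OF compact_ball1 convex_cball _ ] by (metis cball_eq_empty zero_le_one not_less)
    define c where "c = f ((1 + t) *\<^sub>R u)"
    have f0: "f 0 = 0" using bl by (simp add: linear_0 bounded_linear.linear)
    have c0: "c > 0" using fl f0 unfolding c_def by (metis centre_in_cball zero_le_one)
    have fb: "\<bar>f x\<bar> \<le> c * norm x" for x
    proof (cases "x = 0")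
      case True then show ?thesis using f0 by simp
    next
      case False
      define v where "v = x /\<^sub>R norm x"
      have "v \<in> cball 0 1" "-v \<in> cball 0 1" unfolding v_def using False by auto
      then have "f v < c" "f (-v) < c" using fl unfolding c_def by auto
      moreover have "f (-v) = - f v" using bl by (simp add: linear_neg bounded_linear.linear)
      ultimately have "\<bar>f v\<bar> \<le> c" by linarith
      moreover have "f x = norm x * f v"
        using bl False unfolding v_def by (simp add: linear_scale bounded_linear.linear)
      ultimately show ?thesis by (simp add: abs_mult) (metis mult.commute mult_left_mono norm_ge_zero)
    qed
    define g where "g = Blinfun (\<lambda>x. (1/c) * f x)"
    have blg: "bounded_linear (\<lambda>x. (1/c) * f x)" by (rule bounded_linear_const_mult[OF bl])
    have gapp: "blinfun_apply g x = (1/c) * f x" for x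
      unfolding g_def bounded_linear_Blinfun_apply[OF blg] ..
    have "norm g \<le> 1"
    proof (rule norm_blinfun_bound)
      fix x show "norm (blinfun_apply g x) \<le> 1 * norm x"
        using fb[of x] c0 by (simp add: gapp abs_mult divide_le_eq mult.commute)
    qed simp
    then have "blinfun_apply g u \<le> M" using g0(2) unfolding M_def by simp
    moreover have "f ((1 + t) *\<^sub>R u) = (1 + t) * f u" using bl by (simp add: linear_scale bounded_linear.linear)
    then have "blinfun_apply g u = 1 / (1 + t)"
      unfolding gapp c_def using c0 t unfolding c_def by (simp add: field_simps)
    ultimately show ?thesis by simp
  qed
  have "M \<le> 1"
  proof -
    have "M \<le> norm g0 * norm u" unfolding M_def using norm_blinfun[of g0 u] by simp
    also have "\<dots> \<le> 1" using g0(1) nu by simp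
    finally show ?thesis .
  qed
  moreover have "M \<ge> 1"
  proof (rule ccontr)
    assume "\<not> M \<ge> 1"
    then have "M < 1" by simp
    define t where "t = (1 - M) / 2"
    have "t > 0" using \<open>M < 1\<close> unfolding t_def by simp
    then have "M \<ge> 1 / (1 + t)" by (rule lowb)
    then have "M * (1 + t) \<ge> 1" using \<open>t > 0\<close> by (simp add: field_simps)
    then have "M * (3 - M) \<ge> 2" unfolding t_def by (simp add: field_simps)
    moreover have "(1 - M) * (2 - M) > 0" using \<open>M < 1\<close> by (intro mult_pos_pos) auto
    moreover have "(1 - M) * (2 - M) = 2 - M * (3 - M)" by (simp add: algebra_simps)
    ultimately show False by linarith
  qed
  ultimately have "M = 1" by simp
  then have "blinfun_apply g0 w = norm w"
    unfolding M_def u_def using False by (simp add: blinfun.scaleR_right field_simps)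
  then show ?thesis using g0(1) by (intro exI[of _ g0]) simp
qed

end


context fdb begin

lemma dual_ball_char:
  fixes g :: "'c \<Rightarrow>\<^sub>L real"
  shows "norm g \<le> 1 \<longleftrightarrow> (\<forall>p\<in>ext_ball. blinfun_apply g p \<le> 1)"
proof
  assume g: "norm g \<le> 1"
  show "\<forall>p\<in>ext_ball. blinfun_apply g p \<le> 1"
  proof
    fix p :: 'c assume "p \<in> ext_ball"
    then have "norm p \<le> 1" unfolding ext_ball_def extreme_point_of_def by simp
    have "blinfun_apply g p \<le> norm g * norm p" using norm_blinfun[of g p] by simp
    also have "\<dots> \<le> 1" using g \<open>norm p \<le> 1\<close> by (simp add: mult_le_one)
    finally show "blinfun_apply g p \<le> 1" .
  qed
next
  assume h: "\<forall>p\<in>ext_ball. blinfun_apply g p \<le> 1"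
  show "norm g \<le> 1"
  proof (rule opnorm_le1)
    fix x :: 'c assume x: "x extreme_point_of cball 0 1"
    have "blinfun_apply g x \<le> 1" using h x unfolding ext_ball_def by simp
    moreover have "blinfun_apply g (-x) \<le> 1" using h extreme_neg[OF x] unfolding ext_ball_def by simp
    ultimately show "norm (blinfun_apply g x) \<le> 1" by (simp add: blinfun.minus_right)
  qed
qed

lemma dual_ext_finite:
  assumes fin: "finite (ext_ball :: 'c set)"
  shows "finite {g::'c \<Rightarrow>\<^sub>L real. g extreme_point_of cball 0 1}"
proof -
  define E where "E = {g::'c \<Rightarrow>\<^sub>L real. g extreme_point_of cball 0 1}"
  define act where "act g = {p\<in>ext_ball. blinfun_apply g p = 1}" for g :: "'c \<Rightarrow>\<^sub>L real"
  have inj: "inj_on act E"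
  proof (rule inj_onI, rule ccontr)
    fix g h assume gE: "g \<in> E" and hE: "h \<in> E" and eq: "act g = act h" and ne: "g \<noteq> h"
    have gb: "norm g \<le> 1" and hb: "norm h \<le> 1"
      using gE hE unfolding E_def extreme_point_of_def by auto
    have gp: "blinfun_apply g p \<le> 1" and hp: "blinfun_apply h p \<le> 1" if "p \<in> ext_ball" for p
      using gb hb that dual_ball_char by blast+
    define d where "d = g - h"
    define S where "S = {p\<in>ext_ball. blinfun_apply g p < 1}"
    have finS: "finite S" unfolding S_def using fin by simp
    define s where "s = (if S = {} then 1 else Min ((\<lambda>p. (1 - blinfun_apply g p) / (\<bar>blinfun_apply d p\<bar> + 1)) ` S))"
    have s0: "s > 0" unfolding s_def using finS by (auto simp: S_def)
    have sS: "s * \<bar>blinfun_apply d p\<bar> \<le> 1 - blinfun_apply g p" if "p \<in> S" for p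
    proof -
      have "s \<le> (1 - blinfun_apply g p) / (\<bar>blinfun_apply d p\<bar> + 1)"
        unfolding s_def using that finS by auto
      then have "s * (\<bar>blinfun_apply d p\<bar> + 1) \<le> 1 - blinfun_apply g p"
        by (simp add: le_divide_eq add_pos_nonneg)
      then show ?thesis using s0 by (simp add: algebra_simps)
    qed
    have dz: "blinfun_apply d p = 0" if "p \<in> ext_ball" "p \<notin> S" for p
    proof -
      have "blinfun_apply g p = 1" using that gp[OF that(1)] unfolding S_def by simp
      then have "p \<in> act h" using eq that unfolding act_def by blast
      then have "blinfun_apply h p = 1" unfolding act_def by simp
      then show ?thesis unfolding d_def using \<open>blinfun_apply g p = 1\<close> by (simp add: blinfun.diff_left)
    qed
    define g1 where "g1 = g + s *\<^sub>R d"
    define g2 where "g2 = g - s *\<^sub>R d"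
    have bnd: "blinfun_apply g p + s * \<bar>blinfun_apply d p\<bar> \<le> 1" if "p \<in> ext_ball" for p
    proof (cases "p \<in> S")
      case True then show ?thesis using sS[OF True] by simp
    next
      case False then show ?thesis using dz[OF that False] gp[OF that] by simp
    qed
    have n1: "norm g1 \<le> 1" unfolding dual_ball_char
    proof
      fix p :: 'c assume p: "p \<in> ext_ball"
      have "blinfun_apply g1 p = blinfun_apply g p + s * blinfun_apply d p"
        unfolding g1_def by (simp add: blinfun.add_left blinfun.scaleR_left)
      also have "\<dots> \<le> blinfun_apply g p + s * \<bar>blinfun_apply d p\<bar>"
        using s0 by (simp add: mult_left_mono)
      finally show "blinfun_apply g1 p \<le> 1" using bnd[OF p] by simp
    qed
    have n2: "norm g2 \<le> 1" unfolding dual_ball_char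
    proof
      fix p :: 'c assume p: "p \<in> ext_ball"
      have "blinfun_apply g2 p = blinfun_apply g p - s * blinfun_apply d p"
        unfolding g2_def by (simp add: blinfun.diff_left blinfun.scaleR_left)
      also have "\<dots> \<le> blinfun_apply g p + s * \<bar>blinfun_apply d p\<bar>"
        using s0 abs_ge_minus_self[of "blinfun_apply d p"]
        by (metis add_le_cancel_left diff_conv_add_uminus mult_left_mono mult_minus_right less_imp_le)
      finally show "blinfun_apply g2 p \<le> 1" using bnd[OF p] by simp
    qed
    have "d \<noteq> 0" using ne unfolding d_def by simp
    have "g1 - g2 = s *\<^sub>R d + s *\<^sub>R d" unfolding g1_def g2_def by simp
    also have "\<dots> = (s + s) *\<^sub>R d" by (rule scaleR_add_left[symmetric])
    finally have "g1 - g2 \<noteq> 0" using s0 \<open>d \<noteq> 0\<close> by simp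
    then have "g2 \<noteq> g1" by auto
    moreover note n1 n2
    moreover have "g = (1 - 1/2) *\<^sub>R g2 + (1/2) *\<^sub>R g1"
      unfolding g1_def g2_def by (simp add: algebra_simps scaleR_2[symmetric])
    ultimately have "g \<in> open_segment g2 g1 \<and> g2 \<in> cball 0 1 \<and> g1 \<in> cball 0 1"
      unfolding in_segment by (auto intro!: exI[of _ "1/2"])
    then show False using gE unfolding E_def extreme_point_of_def by blast
  qed
  have "act ` E \<subseteq> Pow ext_ball" unfolding act_def by auto
  then have "finite (act ` E)" using fin by (meson finite_Pow_iff finite_subset)
  then show ?thesis using inj finite_imageD unfolding E_def by blast
qed

end


context fdb begin

lemma norming_ext:
  fixes w :: 'c
  shows "\<exists>g::'c \<Rightarrow>\<^sub>L real. g extreme_point_of cball 0 1 \<and> blinfun_apply g w = norm w"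
proof -
  obtain B' :: "('c \<Rightarrow>\<^sub>L real) set" where "fdb B'" using exists_fdb[OF dual_fin] by blast
  interpret D: fdb B' by fact
  obtain g0 :: "'c \<Rightarrow>\<^sub>L real" where g0: "norm g0 \<le> 1" "blinfun_apply g0 w = norm w"
    using norming by blast
  have ct: "continuous_on (cball 0 1) (\<lambda>g::'c \<Rightarrow>\<^sub>L real. blinfun_apply g w)"
    by (rule linear_continuous_on[OF bl_apply_left])
  have cv: "convex_on (cball 0 1) (\<lambda>g::'c \<Rightarrow>\<^sub>L real. blinfun_apply g w)"
    by (rule linear_convex_on[OF bl_apply_left convex_cball])
  obtain e where e: "e extreme_point_of cball (0::'c \<Rightarrow>\<^sub>L real) 1"
      "\<forall>g\<in>cball 0 1. blinfun_apply g w \<le> blinfun_apply e w"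
    using D.max_extreme[OF D.compact_ball1 convex_cball _ ct cv] by auto
  have "norm w \<le> blinfun_apply e w" using e(2) g0 by force
  moreover have "norm e \<le> 1" using e(1) unfolding extreme_point_of_def by simp
  then have "blinfun_apply e w \<le> norm w"
    using norm_blinfun[of e w] by (smt (verit) mult_left_le_one_le norm_ge_zero real_norm_def abs_le_iff)
  ultimately show ?thesis using e(1) by (intro exI[of _ e]) simp
qed

lemma local_prop:
  fixes y z :: 'c
  assumes fin: "finite (ext_ball :: 'c set)"
    and ny: "norm y = 1"
    and hz: "\<And>g. g extreme_point_of supp_fun y \<Longrightarrow> blinfun_apply g z = 0"
  shows "\<exists>\<epsilon>>0. \<forall>t. 0 \<le> t \<and> t \<le> \<epsilon> \<longrightarrow> norm (y + t *\<^sub>R z) \<le> 1"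
proof -
  define F where "F = {g::'c \<Rightarrow>\<^sub>L real. g extreme_point_of cball 0 1}"
  have finF: "finite F" unfolding F_def by (rule dual_ext_finite[OF fin])
  define F1 where "F1 = {g\<in>F. blinfun_apply g y < 1}"
  have finF1: "finite F1" unfolding F1_def using finF by simp
  define \<delta> where "\<delta> = (if F1 = {} then 1 else Min ((\<lambda>g. 1 - blinfun_apply g y) ` F1))"
  have d0: "\<delta> > 0" unfolding \<delta>_def using finF1 by (auto simp: F1_def)
  have dle: "\<delta> \<le> 1 - blinfun_apply g y" if "g \<in> F1" for g
    unfolding \<delta>_def using that finF1 by auto
  define \<epsilon> where "\<epsilon> = \<delta> / (norm z + 1)"
  have e0: "\<epsilon> > 0" unfolding \<epsilon>_def using d0 by (simp add: add_nonneg_pos)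
  have ez: "\<epsilon> * norm z \<le> \<delta>"
  proof -
    have "\<epsilon> * norm z \<le> \<epsilon> * (norm z + 1)" using e0 by simp
    also have "\<dots> = \<delta>"
    proof -
      have "norm z + 1 > 0" using norm_ge_zero[of z] by linarith
      then show ?thesis unfolding \<epsilon>_def by simp
    qed
    finally show ?thesis .
  qed
  have "\<forall>t. 0 \<le> t \<and> t \<le> \<epsilon> \<longrightarrow> norm (y + t *\<^sub>R z) \<le> 1"
  proof (intro allI impI)
    fix t :: real assume t: "0 \<le> t \<and> t \<le> \<epsilon>"
    obtain g :: "'c \<Rightarrow>\<^sub>L real" where gF: "g extreme_point_of cball 0 1"
      and gw: "blinfun_apply g (y + t *\<^sub>R z) = norm (y + t *\<^sub>R z)"
      using norming_ext by blast
    have ng: "norm g \<le> 1" using gF unfolding extreme_point_of_def by simp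
    have gapp: "blinfun_apply g (y + t *\<^sub>R z) = blinfun_apply g y + t * blinfun_apply g z"
      by (simp add: blinfun.add_right blinfun.scaleR_right)
    have gy: "blinfun_apply g y \<le> 1"
      using norm_blinfun[of g y] ng ny by (smt (verit) abs_le_iff real_norm_def mult_le_one norm_ge_zero)
    have gz: "blinfun_apply g z \<le> norm z"
      using norm_blinfun[of g z] ng by (smt (verit) abs_le_iff real_norm_def mult_left_le_one_le norm_ge_zero)
    show "norm (y + t *\<^sub>R z) \<le> 1"
    proof (cases "blinfun_apply g y = 1")
      case True
      have "1 \<le> norm g"
        using norm_blinfun[of g y] True ny by simp
      then have "norm g = 1" using ng by simp
      then have "g \<in> supp_fun y" unfolding supp_fun_def using True by simp
      moreover have "supp_fun y \<subseteq> cball 0 1" unfolding supp_fun_def by auto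
      ultimately have "g extreme_point_of supp_fun y" by (rule extreme_subset[OF gF])
      then have "blinfun_apply g z = 0" by (rule hz)
      then show ?thesis using gw gapp True by simp
    next
      case False
      then have "g \<in> F1" unfolding F1_def F_def using gF gy by simp
      then have "blinfun_apply g y \<le> 1 - \<delta>" using dle by fastforce
      moreover have "t * blinfun_apply g z \<le> \<delta>"
      proof -
        have "t * blinfun_apply g z \<le> t * norm z" using t gz by (simp add: mult_left_mono)
        also have "\<dots> \<le> \<epsilon> * norm z" using t by (simp add: mult_right_mono)
        finally show ?thesis using ez by simp
      qed
      ultimately show ?thesis using gw gapp by simp
    qed
  qed
  then show ?thesis using e0 by blast
qed

end


lemma extreme_imp_N:
  fixes T S :: "'a::real_normed_vector \<Rightarrow>\<^sub>L 'b::real_normed_vector"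
    and BX :: "'a set" and BY :: "'b set"
  assumes fX: "fdb BX" and fY: "fdb BY"
    and finX: "finite (ext_ball :: 'a set)" and finY: "finite (ext_ball :: 'b set)"
    and nT: "norm T = 1" and ex: "extreme_contraction T"
    and hS: "\<forall>x\<in>norm_attain T \<inter> ext_ball. \<forall>g. g extreme_point_of supp_fun (blinfun_apply T x) \<longrightarrow>
               blinfun_apply g (blinfun_apply S x) = 0"
  shows "S = 0"
proof (rule ccontr)
  assume S0: "S \<noteq> 0"
  interpret X: fdb BX by fact
  interpret Y: fdb BY by fact
  have "T \<noteq> 0" using nT by auto
  then obtain v where "blinfun_apply T v \<noteq> 0" by (metis blinfun_eqI zero_blinfun.rep_eq)
  then have ntX: "\<exists>v::'a. v \<noteq> 0" by (metis blinfun.zero_right)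
  have nx: "norm x = 1" if "x \<in> ext_ball" for x :: 'a
    using ext_norm1[OF _ ntX] that unfolding ext_ball_def by simp
  have Tx1: "norm (blinfun_apply T x) \<le> 1" if "x \<in> ext_ball" for x
    using norm_blinfun[of T x] nT nx[OF that] by simp
  have loc: "\<exists>e>0. \<forall>t. 0 \<le> t \<and> t \<le> e \<longrightarrow> norm (blinfun_apply T x + t *\<^sub>R blinfun_apply S x) \<le> 1
              \<and> norm (blinfun_apply T x - t *\<^sub>R blinfun_apply S x) \<le> 1" if x: "x \<in> ext_ball" for x
  proof (cases "norm (blinfun_apply T x) = 1")
    case True
    then have xa: "x \<in> norm_attain T \<inter> ext_ball" using x nx[OF x] nT unfolding norm_attain_def by simp
    have h1: "\<And>g. g extreme_point_of supp_fun (blinfun_apply T x) \<Longrightarrow> blinfun_apply g (blinfun_apply S x) = 0"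
      using hS xa by blast
    have h2: "\<And>g. g extreme_point_of supp_fun (blinfun_apply T x) \<Longrightarrow> blinfun_apply g (- blinfun_apply S x) = 0"
      using h1 by (simp add: blinfun.minus_right)
    obtain e1 where e1: "e1 > 0" "\<forall>t. 0 \<le> t \<and> t \<le> e1 \<longrightarrow> norm (blinfun_apply T x + t *\<^sub>R blinfun_apply S x) \<le> 1"
      using Y.local_prop[OF finY True h1] by blast
    obtain e2 where e2: "e2 > 0" "\<forall>t. 0 \<le> t \<and> t \<le> e2 \<longrightarrow> norm (blinfun_apply T x + t *\<^sub>R (- blinfun_apply S x)) \<le> 1"
      using Y.local_prop[OF finY True h2] by blast
    show ?thesis using e1 e2 by (intro exI[of _ "min e1 e2"]) auto
  next
    case False
    then have lt: "norm (blinfun_apply T x) < 1" using Tx1[OF x] by simp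
    define e where "e = (1 - norm (blinfun_apply T x)) / (norm S + 1)"
    have np: "norm S + 1 > 0" using norm_ge_zero[of S] by linarith
    have e0: "e > 0" unfolding e_def using lt np by simp
    have key: "norm (blinfun_apply T x) + t * norm S \<le> 1" if t: "0 \<le> t" "t \<le> e" for t
    proof -
      have "t * norm S \<le> e * (norm S + 1)" using t by (intro mult_mono) auto
      also have "\<dots> = 1 - norm (blinfun_apply T x)" unfolding e_def using np by simp
      finally show ?thesis by simp
    qed
    have Sx: "norm (t *\<^sub>R blinfun_apply S x) \<le> t * norm S" if "0 \<le> t" for t
      using norm_blinfun[of S x] nx[OF x] that by (simp add: mult_left_mono)
    show ?thesis
    proof (intro exI[of _ e] conjI e0 allI impI)
      fix t assume t: "0 \<le> t \<and> t \<le> e"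
      show "norm (blinfun_apply T x + t *\<^sub>R blinfun_apply S x) \<le> 1"
        using norm_triangle_ineq[of "blinfun_apply T x" "t *\<^sub>R blinfun_apply S x"] Sx[of t] key[of t] t by linarith
      show "norm (blinfun_apply T x - t *\<^sub>R blinfun_apply S x) \<le> 1"
        using norm_triangle_ineq4[of "blinfun_apply T x" "t *\<^sub>R blinfun_apply S x"] Sx[of t] key[of t] t by linarith
    qed
  qed
  then obtain ef where ef: "\<forall>x\<in>ext_ball. ef x > 0 \<and> (\<forall>t. 0 \<le> t \<and> t \<le> ef x \<longrightarrow>
       norm (blinfun_apply T x + t *\<^sub>R blinfun_apply S x) \<le> 1 \<and>
       norm (blinfun_apply T x - t *\<^sub>R blinfun_apply S x) \<le> 1)"
    by metis
  define \<epsilon> where "\<epsilon> = (if (ext_ball::'a set) = {} then 1 else Min (ef ` ext_ball))"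
  have e0: "\<epsilon> > 0" unfolding \<epsilon>_def using finX ef by auto
  have ele: "\<epsilon> \<le> ef x" if "x \<in> ext_ball" for x unfolding \<epsilon>_def using finX that by auto
  define A1 where "A1 = T + \<epsilon> *\<^sub>R S"
  define A2 where "A2 = T - \<epsilon> *\<^sub>R S"
  have n1: "norm A1 \<le> 1"
  proof (rule X.opnorm_le1)
    fix x :: 'a assume "x extreme_point_of cball 0 1"
    then have x: "x \<in> ext_ball" unfolding ext_ball_def by simp
    show "norm (blinfun_apply A1 x) \<le> 1"
      unfolding A1_def using ef x ele[OF x] e0 by (simp add: blinfun.add_left blinfun.scaleR_left)
  qed
  have n2: "norm A2 \<le> 1"
  proof (rule X.opnorm_le1)
    fix x :: 'a assume "x extreme_point_of cball 0 1"
    then have x: "x \<in> ext_ball" unfolding ext_ball_def by simp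
    show "norm (blinfun_apply A2 x) \<le> 1"
      unfolding A2_def using ef x ele[OF x] e0 by (simp add: blinfun.diff_left blinfun.scaleR_left)
  qed
  have "A1 - A2 = \<epsilon> *\<^sub>R S + \<epsilon> *\<^sub>R S" unfolding A1_def A2_def by simp
  also have "\<dots> = (\<epsilon> + \<epsilon>) *\<^sub>R S" by (rule scaleR_add_left[symmetric])
  finally have "A1 - A2 \<noteq> 0" using e0 S0 by simp
  then have neq: "A2 \<noteq> A1" by auto
  have "T = (1 - 1/2) *\<^sub>R A2 + (1/2) *\<^sub>R A1"
    unfolding A1_def A2_def by (simp add: algebra_simps scaleR_2[symmetric])
  then have "T \<in> open_segment A2 A1" unfolding in_segment using neq by (auto intro!: exI[of _ "1/2"])
  moreover have "A1 \<in> cball 0 1" "A2 \<in> cball 0 1" using n1 n2 by auto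
  ultimately show False using ex unfolding extreme_contraction_def extreme_point_of_def by blast
qed


interpretation U: vector_space scale_tuple
  by unfold_locales (simp_all add: scale_tuple_def fun_eq_iff algebra_simps)

lemma U_span_eq: "module.span scale_tuple = U.span" by simp
lemma U_dim_eq: "vector_space.dim scale_tuple = U.dim" by simp

lemma fun_sum_apply: "(sum F A) x = (\<Sum>a\<in>A. F a x)" for F :: "'i \<Rightarrow> 'x \<Rightarrow> real"
  by (induction A rule: infinite_finite_induct) (simp_all add: plus_fun_def zero_fun_def)

definition ee :: "nat \<Rightarrow> nat \<Rightarrow> nat \<times> nat \<Rightarrow> real" where
  "ee i j = (\<lambda>x. if x = (i, j) then 1 else 0)"

definition EE :: "nat \<Rightarrow> nat \<Rightarrow> (nat \<times> nat \<Rightarrow> real) set" where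
  "EE k p = (\<lambda>(i,j). ee i j) ` ({..<k} \<times> {..<p})"

definition Ukp :: "nat \<Rightarrow> nat \<Rightarrow> (nat \<times> nat \<Rightarrow> real) set" where
  "Ukp k p = {f. \<forall>i j. \<not> (i < k \<and> j < p) \<longrightarrow> f (i, j) = 0}"

lemma finite_EE: "finite (EE k p)" unfolding EE_def by simp

lemma card_EE: "card (EE k p) \<le> k * p"
  unfolding EE_def by (metis card_image_le card_cartesian_product card_lessThan finite_cartesian_product finite_lessThan)

lemma Ukp_expand:
  assumes "f \<in> Ukp k p"
  shows "f = (\<Sum>ij\<in>{..<k} \<times> {..<p}. scale_tuple (f ij) (ee (fst ij) (snd ij)))"
proof (rule ext)
  fix x :: "nat \<times> nat"
  obtain i j where x: "x = (i, j)" by fastforce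
  have "(\<Sum>ij\<in>{..<k} \<times> {..<p}. scale_tuple (f ij) (ee (fst ij) (snd ij))) x
      = (\<Sum>ij\<in>{..<k} \<times> {..<p}. (if x = ij then f ij else 0))"
    unfolding fun_sum_apply scale_tuple_def ee_def by (intro sum.cong) auto
  also have "\<dots> = (if x \<in> {..<k} \<times> {..<p} then f x else 0)"
    by (simp add: sum.delta)
  also have "\<dots> = f x" using assms unfolding Ukp_def x by auto
  finally show "f x = (\<Sum>ij\<in>{..<k} \<times> {..<p}. scale_tuple (f ij) (ee (fst ij) (snd ij))) x" by simp
qed

lemma Ukp_span: "f \<in> Ukp k p \<Longrightarrow> f \<in> U.span (EE k p)"
  apply (subst Ukp_expand[of f k p], assumption)
  apply (intro U.span_sum U.span_scale U.span_base)
  apply (auto simp: EE_def)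
  done

lemma tensor_Ukp: "tensor_tuple k p \<alpha> \<beta> \<in> Ukp k p"
  unfolding Ukp_def tensor_tuple_def by auto

lemma lam_subspace:
  "U.subspace {f. (\<Sum>i<k. \<Sum>j<p. f (i,j) * c i j) = (0::real)}"
proof (rule U.subspaceI)
  fix a :: real and x :: "nat \<times> nat \<Rightarrow> real"
  assume "x \<in> {f. (\<Sum>i<k. \<Sum>j<p. f (i,j) * c i j) = 0}"
  then have h: "(\<Sum>i<k. \<Sum>j<p. x (i,j) * c i j) = 0" by simp
  have "(\<Sum>i<k. \<Sum>j<p. scale_tuple a x (i,j) * c i j) = a * (\<Sum>i<k. \<Sum>j<p. x (i,j) * c i j)"
    by (simp add: scale_tuple_def sum_distrib_left mult.assoc)
  then show "scale_tuple a x \<in> {f. (\<Sum>i<k. \<Sum>j<p. f (i,j) * c i j) = 0}" using h by simp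
qed (simp_all add: plus_fun_def sum.distrib distrib_right)

lemma lam_ee:
  assumes "i < k" "j < p"
  shows "(\<Sum>i'<k. \<Sum>j'<p. ee i j (i',j') * c i' j') = c i j"
proof -
  have "(\<Sum>j'<p. ee i j (i',j') * c i' j') = (if i' = i then c i j else 0)" for i'
  proof -
    have "(\<Sum>j'<p. ee i j (i',j') * c i' j') = (\<Sum>j'<p. if j' = j then (if i' = i then c i j else 0) else 0)"
      unfolding ee_def by (intro sum.cong) auto
    also have "\<dots> = (if i' = i then c i j else 0)" using assms(2) by (simp add: sum.delta)
    finally show ?thesis .
  qed
  then show ?thesis using assms(1) by (simp add: sum.delta)
qed


lemma pairing:
  fixes S :: "'a::real_normed_vector \<Rightarrow>\<^sub>L 'b::real_normed_vector"
    and vs :: "'a list" and ys :: "('b \<Rightarrow>\<^sub>L real) list"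
  shows "(\<Sum>i<length vs. \<Sum>j<length ys. tensor_tuple (length vs) (length ys) \<alpha> \<beta> (i,j) *
            blinfun_apply (ys!j) (blinfun_apply S (vs!i)))
       = blinfun_apply (\<Sum>j<length ys. \<beta> j *\<^sub>R ys!j) (blinfun_apply S (\<Sum>i<length vs. \<alpha> i *\<^sub>R vs!i))"
proof -
  have "blinfun_apply (\<Sum>j<length ys. \<beta> j *\<^sub>R ys!j) (blinfun_apply S (\<Sum>i<length vs. \<alpha> i *\<^sub>R vs!i))
      = (\<Sum>i<length vs. \<alpha> i * (\<Sum>j<length ys. \<beta> j * blinfun_apply (ys!j) (blinfun_apply S (vs!i))))"
    by (simp add: blinfun.sum_left blinfun.sum_right blinfun.scaleR_left blinfun.scaleR_right)
  also have "\<dots> = (\<Sum>i<length vs. \<Sum>j<length ys. \<alpha> i * \<beta> j * blinfun_apply (ys!j) (blinfun_apply S (vs!i)))"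
    by (simp add: sum_distrib_left mult.assoc)
  also have "\<dots> = (\<Sum>i<length vs. \<Sum>j<length ys. tensor_tuple (length vs) (length ys) \<alpha> \<beta> (i,j) *
            blinfun_apply (ys!j) (blinfun_apply S (vs!i)))"
    by (simp add: tensor_tuple_def)
  finally show ?thesis by simp
qed

definition Gen :: "'a::real_normed_vector list \<Rightarrow> ('b::real_normed_vector \<Rightarrow>\<^sub>L real) list \<Rightarrow> 'a set \<Rightarrow> ('a \<Rightarrow> ('b \<Rightarrow>\<^sub>L real) set) \<Rightarrow> (nat \<times> nat \<Rightarrow> real) set" where
  "Gen vs ys E G = {tensor_tuple (length vs) (length ys) \<alpha> \<beta> | \<alpha> \<beta>.
        (\<Sum>i<length vs. \<alpha> i *\<^sub>R vs ! i) \<in> E \<and>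
        (\<Sum>j<length ys. \<beta> j *\<^sub>R ys ! j) \<in> G (\<Sum>i<length vs. \<alpha> i *\<^sub>R vs ! i)}"

lemma Z_space_Gen:
  "Z_space vs ys R T = U.span (Gen vs ys (R \<inter> ext_ball) (\<lambda>x. {f. f extreme_point_of supp_fun (blinfun_apply T x)}))"
  unfolding Z_space_def Gen_def by simp

lemma Gen_Ukp: "Gen vs ys E G \<subseteq> Ukp (length vs) (length ys)"
  unfolding Gen_def using tensor_Ukp by blast

lemma span_Gen_sub: "U.span (Gen vs ys E G) \<subseteq> U.span (EE (length vs) (length ys))"
proof -
  have "Gen vs ys E G \<subseteq> U.span (EE (length vs) (length ys))" using Gen_Ukp Ukp_span by blast
  then show ?thesis by (rule U.span_minimal) simp
qed

lemma dim_Gen_le: "U.dim (U.span (Gen vs ys E G)) \<le> length vs * length ys"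
  using U.dim_le_card[OF span_Gen_sub finite_EE] card_EE by (meson order_trans)

lemma lam_vanish:
  fixes S :: "'a::real_normed_vector \<Rightarrow>\<^sub>L 'b::real_normed_vector"
  assumes hS: "\<forall>x\<in>E. \<forall>g\<in>G x. blinfun_apply g (blinfun_apply S x) = 0"
    and f: "f \<in> U.span (Gen vs ys E G)"
  shows "(\<Sum>i<length vs. \<Sum>j<length ys. f (i,j) * blinfun_apply (ys!j) (blinfun_apply S (vs!i))) = 0"
proof -
  have "Gen vs ys E G \<subseteq> {f. (\<Sum>i<length vs. \<Sum>j<length ys. f (i,j) * blinfun_apply (ys!j) (blinfun_apply S (vs!i))) = 0}"
  proof
    fix t assume "t \<in> Gen vs ys E G"
    then obtain \<alpha> \<beta> where t: "t = tensor_tuple (length vs) (length ys) \<alpha> \<beta>"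
      and x: "(\<Sum>i<length vs. \<alpha> i *\<^sub>R vs ! i) \<in> E"
      and g: "(\<Sum>j<length ys. \<beta> j *\<^sub>R ys ! j) \<in> G (\<Sum>i<length vs. \<alpha> i *\<^sub>R vs ! i)"
      unfolding Gen_def by blast
    show "t \<in> {f. (\<Sum>i<length vs. \<Sum>j<length ys. f (i,j) * blinfun_apply (ys!j) (blinfun_apply S (vs!i))) = 0}"
      unfolding t using pairing[of vs ys \<alpha> \<beta> S] hS x g by simp
  qed
  then have "U.span (Gen vs ys E G) \<subseteq> {f. (\<Sum>i<length vs. \<Sum>j<length ys. f (i,j) * blinfun_apply (ys!j) (blinfun_apply S (vs!i))) = 0}"
    by (intro U.span_minimal lam_subspace)
  then show ?thesis using f by blast
qed


lemma span_list_repr: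
  fixes vs :: "'v::real_vector list"
  assumes "distinct vs" "x \<in> span (set vs)"
  shows "\<exists>\<alpha>. x = (\<Sum>i<length vs. \<alpha> i *\<^sub>R vs ! i)"
proof -
  obtain u where u: "x = (\<Sum>v\<in>set vs. u v *\<^sub>R v)"
    using assms(2) real_vector.span_finite[of "set vs"] by auto
  have "(\<Sum>v\<in>set vs. u v *\<^sub>R v) = (\<Sum>i<length vs. u (vs!i) *\<^sub>R vs ! i)"
  proof -
    have "set vs = (!) vs ` {..<length vs}" by (auto simp: set_conv_nth)
    moreover have "inj_on ((!) vs) {..<length vs}" using assms(1) by (simp add: inj_on_def nth_eq_iff_index_eq)
    ultimately show ?thesis by (simp add: sum.reindex)
  qed
  then show ?thesis using u by (intro exI[of _ "\<lambda>i. u (vs!i)"]) simp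
qed

lemma rep_list:
  fixes bs :: "'v::real_vector list"
  assumes ind: "independent (set bs)" and d: "distinct bs" and p: "p \<le> length bs" and j: "j < p"
  shows "representation (set bs) (\<Sum>i<p. c i *\<^sub>R bs ! i) (bs ! j) = c j"
proof -
  have sp: "bs ! i \<in> span (set bs)" if "i < p" for i using that p by (intro real_vector.span_base) simp
  have "representation (set bs) (\<Sum>i<p. c i *\<^sub>R bs ! i) (bs ! j)
      = (\<Sum>i<p. representation (set bs) (c i *\<^sub>R bs ! i) (bs ! j))"
    using real_vector.representation_sum[OF ind, of "{..<p}" "\<lambda>i. c i *\<^sub>R bs ! i"] sp
    by (simp add: real_vector.span_scale)
  also have "\<dots> = (\<Sum>i<p. c i * (if bs ! j = bs ! i then 1 else 0))"
  proof (intro sum.cong refl)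
    fix i assume "i \<in> {..<p}"
    then have i: "i < length bs" using p by simp
    show "representation (set bs) (c i *\<^sub>R bs ! i) (bs ! j) = c i * (if bs ! j = bs ! i then 1 else 0)"
      using real_vector.representation_scale[OF ind sp[of i]] real_vector.representation_basis[OF ind, of "bs ! i"] i
        \<open>i \<in> {..<p}\<close> by simp
  qed
  also have "\<dots> = (\<Sum>i<p. if i = j then c i else 0)"
    using d j p by (intro sum.cong refl) (auto simp: nth_eq_iff_index_eq)
  also have "\<dots> = c j" using j by (simp add: sum.delta')
  finally show ?thesis .
qed

lemma list_coeffs_zero:
  fixes bs :: "'v::real_vector list"
  assumes "independent (set bs)" "distinct bs" "p \<le> length bs" "(\<Sum>i<p. c i *\<^sub>R bs ! i) = 0" "j < p"
  shows "c j = 0"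
  using rep_list[OF assms(1,2,3,5), of c] assms(4) by (simp add: real_vector.representation_zero)

lemma mn_arith:
  fixes k m p n :: nat
  assumes "k \<le> m" "p \<le> n" "m * n \<le> k * p" "0 < m" "0 < n"
  shows "k = m \<and> p = n"
proof (rule ccontr)
  assume "\<not> (k = m \<and> p = n)"
  then have "k < m \<or> p < n" using assms by auto
  then have "k * p < m * n"
  proof
    assume "k < m"
    then have "k * p \<le> k * n" "k * n < m * n" using assms by (simp_all add: mult_le_mono2)
    then show ?thesis by linarith
  next
    assume "p < n"
    then have "k * p \<le> m * p" "m * p < m * n" using assms by (simp_all add: mult_le_mono1)
    then show ?thesis by linarith
  qed
  then show False using assms(3) by simp
qed

context fdb begin

lemma dim_UNIV_card: "dim (UNIV::'c set) = card B"
  using real_vector.dim_eq_card_independent[OF iB] sB by (metis real_vector.dim_span)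

lemma dual_dim_le: "dim (UNIV :: ('c \<Rightarrow>\<^sub>L real) set) \<le> dim (UNIV :: 'c set)"
proof -
  define cb where "cb b = Blinfun (\<lambda>x. representation B x b)" for b
  have cb_apply: "blinfun_apply (cb b) x = representation B x b" for b x
    unfolding cb_def by (simp add: bounded_linear_Blinfun_apply[OF rep_bl])
  have "g \<in> span (cb ` B)" for g :: "'c \<Rightarrow>\<^sub>L real"
  proof -
    have "g = (\<Sum>b\<in>B. blinfun_apply g b *\<^sub>R cb b)"
    proof (rule blinfun_eqI)
      fix x
      have "blinfun_apply g x = blinfun_apply g (\<Sum>b\<in>B. representation B x b *\<^sub>R b)"
        by (simp add: rep_sum_eq)
      also have "\<dots> = (\<Sum>b\<in>B. representation B x b * blinfun_apply g b)"
        by (simp add: blinfun.sum_right blinfun.scaleR_right)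
      also have "\<dots> = blinfun_apply (\<Sum>b\<in>B. blinfun_apply g b *\<^sub>R cb b) x"
        by (simp add: blinfun.sum_left blinfun.scaleR_left cb_apply mult.commute)
      finally show "blinfun_apply g x = blinfun_apply (\<Sum>b\<in>B. blinfun_apply g b *\<^sub>R cb b) x" .
    qed
    also have "\<dots> \<in> span (cb ` B)"
      by (intro real_vector.span_sum real_vector.span_scale real_vector.span_base) auto
    finally show ?thesis .
  qed
  then have "UNIV \<subseteq> span (cb ` B)" by blast
  then have "dim (UNIV :: ('c \<Rightarrow>\<^sub>L real) set) \<le> card (cb ` B)"
    using real_vector.dim_le_card fB by blast
  also have "\<dots> \<le> card B" using fB by (rule card_image_le)
  finally show ?thesis using dim_UNIV_card by simp
qed

lemma list_spans:
  fixes vs :: "'c list"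
  assumes "distinct vs" "independent (set vs)" "dim (UNIV::'c set) \<le> length vs"
  shows "span (set vs) = UNIV"
proof -
  interpret FD: finite_dimensional_vector_space scaleR B by unfold_locales (use fB iB sB in \<open>auto simp: dependent_raw_def span_raw_def\<close>)
  have "UNIV \<subseteq> span (set vs)"
    using FD.card_ge_dim_independent[of "set vs" UNIV] assms by (simp add: distinct_card dim_raw_def span_raw_def dependent_raw_def)
  then show ?thesis by blast
qed

lemma list_le_dim:
  fixes vs :: "'c list"
  assumes "distinct vs" "independent (set vs)"
  shows "length vs \<le> dim (UNIV::'c set)"
proof -
  interpret FD: finite_dimensional_vector_space scaleR B by unfold_locales (use fB iB sB in \<open>auto simp: dependent_raw_def span_raw_def\<close>)
  show ?thesis
    using FD.independent_card_le_dim[of "set vs" UNIV] assms by (simp add: distinct_card dim_raw_def span_raw_def dependent_raw_def)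
qed

lemma separates: "y \<noteq> 0 \<Longrightarrow> \<exists>g::'c \<Rightarrow>\<^sub>L real. blinfun_apply g y \<noteq> 0"
proof -
  assume "y \<noteq> 0"
  obtain g :: "'c \<Rightarrow>\<^sub>L real" where "blinfun_apply g y = norm y" using norming[of y] by blast
  then show ?thesis using \<open>y \<noteq> 0\<close> by (intro exI[of _ g]) simp
qed

lemma blist: obtains bs where "distinct bs" "set bs = B" "length bs = dim (UNIV::'c set)"
proof -
  obtain bs where "set bs = B" "distinct bs" using finite_distinct_list[OF fB] by blast
  moreover then have "length bs = dim (UNIV::'c set)" using dim_UNIV_card distinct_card by metis
  ultimately show ?thesis using that by blast
qed

lemma annihilator:
  fixes ys :: "('c \<Rightarrow>\<^sub>L real) list"
  assumes lt: "length ys < dim (UNIV::'c set)"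
  shows "\<exists>y. y \<noteq> 0 \<and> (\<forall>j<length ys. blinfun_apply (ys!j) y = 0)"
proof -
  interpret FD: finite_dimensional_vector_space scaleR B by unfold_locales (use fB iB sB in \<open>auto simp: dependent_raw_def span_raw_def\<close>)
  obtain bs where bs: "distinct bs" "set bs = B" "length bs = dim (UNIV::'c set)" by (rule blist)
  define p where "p = length ys"
  define \<Phi> where "\<Phi> y = (\<Sum>j<p. blinfun_apply (ys!j) y *\<^sub>R bs!j)" for y
  have "bounded_linear \<Phi>" unfolding \<Phi>_def
    by (intro bounded_linear_sum bounded_linear_compose[OF bounded_linear_scaleR_left] blinfun.bounded_linear_right)
  then have lin: "linear \<Phi>" by (rule bounded_linear.linear)
  have "\<not> inj \<Phi>"
  proof
    assume "inj \<Phi>"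
    then have "surj \<Phi>" using FD.linear_inj_imp_surj[OF lin[unfolded linear_def]] by blast
    then obtain y where y: "\<Phi> y = bs ! p" by (metis surjD)
    have pl: "p < length bs" using lt bs(3) unfolding p_def by simp
    have "representation (set bs) (\<Phi> y) (bs ! p) = 1"
    proof -
      have bp: "bs ! p \<in> set bs" using pl by simp
      have ib: "independent (set bs)" using bs(2) iB by simp
      show ?thesis using y real_vector.representation_basis[OF ib bp] by simp
    qed
    moreover have "representation (set bs) (\<Phi> y) (bs ! p) = 0"
    proof -
      define c where "c j = (if j < p then blinfun_apply (ys!j) y else 0)" for j
      have "\<Phi> y = (\<Sum>j<Suc p. c j *\<^sub>R bs!j)" unfolding \<Phi>_def c_def by simp
      then show ?thesis using rep_list[of bs "Suc p" p c] bs iB pl by (simp add: c_def)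
    qed
    ultimately show False by simp
  qed
  then obtain y where "y \<noteq> 0" "\<Phi> y = 0" using real_vector.linear_inj_iff_eq_0[OF lin] by blast
  moreover have "blinfun_apply (ys!j) y = 0" if "j < p" for j
    using list_coeffs_zero[of bs p "\<lambda>j. blinfun_apply (ys!j) y" j] \<open>\<Phi> y = 0\<close> bs iB that lt
    unfolding \<Phi>_def p_def by simp
  ultimately show ?thesis unfolding p_def by blast
qed

lemma dual_vectors:
  fixes ys :: "('c \<Rightarrow>\<^sub>L real) list"
  assumes d: "distinct ys" and sp: "span (set ys) = UNIV" and len: "length ys = dim (UNIV::'c set)"
    and j: "j < length ys"
  shows "\<exists>y. \<forall>l<length ys. blinfun_apply (ys!l) y = (if l = j then 1 else 0)"
proof -
  interpret FD: finite_dimensional_vector_space scaleR B by unfold_locales (use fB iB sB in \<open>auto simp: dependent_raw_def span_raw_def\<close>)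
  obtain bs where bs: "distinct bs" "set bs = B" "length bs = dim (UNIV::'c set)" by (rule blist)
  define p where "p = length ys"
  define \<Phi> where "\<Phi> y = (\<Sum>l<p. blinfun_apply (ys!l) y *\<^sub>R bs!l)" for y
  have "bounded_linear \<Phi>" unfolding \<Phi>_def
    by (intro bounded_linear_sum bounded_linear_compose[OF bounded_linear_scaleR_left] blinfun.bounded_linear_right)
  then have lin: "linear \<Phi>" by (rule bounded_linear.linear)
  have coef: "representation (set bs) (\<Phi> y) (bs ! l) = blinfun_apply (ys!l) y" if "l < p" for y l
    unfolding \<Phi>_def using rep_list[of bs p l] bs iB that len unfolding p_def by simp
  have "inj \<Phi>"
    unfolding real_vector.linear_inj_iff_eq_0[OF lin]
  proof (intro allI impI)
    fix y assume "\<Phi> y = 0"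
    then have z: "blinfun_apply (ys!l) y = 0" if "l < p" for l
      using coef[OF that, of y] by (simp add: real_vector.representation_zero)
    have "blinfun_apply g y = 0" for g :: "'c \<Rightarrow>\<^sub>L real"
    proof -
      have "g \<in> span (set ys)" using sp by simp
      then obtain \<beta> where "g = (\<Sum>l<p. \<beta> l *\<^sub>R ys ! l)" using span_list_repr[OF d] unfolding p_def by blast
      then show ?thesis using z by (simp add: blinfun.sum_left blinfun.scaleR_left)
    qed
    then show "y = 0" using separates by blast
  qed
  then have "surj \<Phi>" using FD.linear_inj_imp_surj[OF lin[unfolded linear_def]] by blast
  then obtain y where y: "\<Phi> y = bs ! j" by (metis surjD)
  have "blinfun_apply (ys!l) y = (if l = j then 1 else 0)" if "l < p" for l
  proof -
    have "blinfun_apply (ys!l) y = representation (set bs) (bs ! j) (bs ! l)"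
      using coef[OF that, of y] y by simp
    also have "\<dots> = (if l = j then 1 else 0)"
      using real_vector.representation_basis[of "set bs" "bs ! j"] bs iB j that len
      by (auto simp: p_def nth_eq_iff_index_eq)
    finally show ?thesis .
  qed
  then show ?thesis unfolding p_def by blast
qed

end


lemma ee_inj: "ee i j = ee i' j' \<Longrightarrow> i = i' \<and> j = j'"
  unfolding ee_def by (metis (mono_tags) prod.inject zero_neq_one)

lemma card_EE_eq: "card (EE k p) = k * p"
proof -
  have "inj_on (\<lambda>(i,j). ee i j) ({..<k} \<times> {..<p})"
    by (auto simp: inj_on_def dest: ee_inj)
  then show ?thesis unfolding EE_def by (simp add: card_image card_cartesian_product)
qed

lemma EE_val: "v \<in> EE k p \<Longrightarrow> v (i, j) = (if v = ee i j then 1 else 0)"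
proof -
  assume "v \<in> EE k p"
  then obtain a b where v: "v = ee a b" unfolding EE_def by auto
  have "(ee a b = ee i j) = (a = i \<and> b = j)" using ee_inj by metis
  then show ?thesis unfolding v by (simp add: ee_def)
qed

lemma EE_indep: "U.independent (EE k p)"
proof
  assume "U.dependent (EE k p)"
  then obtain u v where v: "v \<in> EE k p" "u v \<noteq> 0" and s: "(\<Sum>w\<in>EE k p. scale_tuple (u w) w) = 0"
    using U.dependent_finite[OF finite_EE] by blast
  obtain i j where vij: "v = ee i j" using v(1) unfolding EE_def by auto
  have "0 = (\<Sum>w\<in>EE k p. scale_tuple (u w) w) (i, j)" using s by (simp add: zero_fun_def)
  also have "\<dots> = (\<Sum>w\<in>EE k p. if w = v then u w else 0)"
    unfolding fun_sum_apply scale_tuple_def by (intro sum.cong refl) (simp add: EE_val vij)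
  also have "\<dots> = u v" using v(1) finite_EE by (simp add: sum.delta')
  finally show False using v(2) by simp
qed

lemma dim_span_EE: "U.dim (U.span (EE k p)) = k * p"
  using U.dim_span_eq_card_independent[OF EE_indep] card_EE_eq by simp

lemma EE_sub: "EE k p \<subseteq> Ukp k p"
  unfolding EE_def Ukp_def ee_def by auto

lemma full_dim_contains:
  assumes sub: "Z \<subseteq> U.span (EE k p)" and subsp: "U.subspace Z" and d: "U.dim Z \<ge> k * p"
  shows "EE k p \<subseteq> Z"
proof
  fix e assume e: "e \<in> EE k p"
  obtain BZ where BZ: "BZ \<subseteq> Z" "U.independent BZ" "Z \<subseteq> U.span BZ" "card BZ = U.dim Z"
    by (rule U.basis_exists)
  have spBZ: "U.span BZ = Z" using BZ subsp by (metis U.span_subspace)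
  show "e \<in> Z"
  proof (rule ccontr)
    assume "e \<notin> Z"
    then have ind: "U.independent (insert e BZ)" using BZ(2) spBZ by (intro U.independent_insertI) auto
    have "insert e BZ \<subseteq> U.span (EE k p)" using BZ(1) sub e U.span_base by blast
    then have "finite (insert e BZ) \<and> card (insert e BZ) \<le> card (EE k p)"
      by (rule U.independent_span_bound[OF finite_EE ind])
    moreover have "e \<notin> BZ" using \<open>e \<notin> Z\<close> BZ(1) by blast
    ultimately have "card (insert e BZ) = Suc (card BZ)" "card (insert e BZ) \<le> k * p"
      using card_EE_eq[of k p] by auto
    then have "card BZ + 1 \<le> k * p" by simp
    then show False using BZ(4) d by simp
  qed
qed

lemma ext_functional:
  assumes sub: "Z \<subseteq> U.span (EE k p)" and subsp: "U.subspace Z" and nsub: "\<not> EE k p \<subseteq> Z"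
  shows "\<exists>c i0 j0. i0 < k \<and> j0 < p \<and> c i0 j0 \<noteq> (0::real) \<and>
           (\<forall>f\<in>Z. f \<in> Ukp k p \<longrightarrow> (\<Sum>i<k. \<Sum>j<p. f (i,j) * c i j) = 0)"
proof -
  obtain e where e: "e \<in> EE k p" "e \<notin> Z" using nsub by blast
  then obtain i0 j0 where ij: "i0 < k" "j0 < p" "e = ee i0 j0" unfolding EE_def by auto
  obtain BZ where BZ: "BZ \<subseteq> Z" "U.independent BZ" "Z \<subseteq> U.span BZ" "card BZ = U.dim Z"
    by (rule U.basis_exists)
  have spBZ: "U.span BZ = Z" using BZ subsp by (metis U.span_subspace)
  have ind: "U.independent (insert e BZ)" using BZ(2) spBZ e(2) by (intro U.independent_insertI) auto
  obtain B2 where B2: "insert e BZ \<subseteq> B2" "B2 \<subseteq> UNIV" "U.independent B2" "UNIV \<subseteq> U.span B2"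
    by (rule U.maximal_independent_subset_extend[OF subset_UNIV ind])
  define \<Lambda> where "\<Lambda> f = U.representation B2 f e" for f
  have sp: "f \<in> U.span B2" for f using B2(4) by blast
  have Ladd: "\<Lambda> (f + g) = \<Lambda> f + \<Lambda> g" for f g
    unfolding \<Lambda>_def using U.representation_add[OF B2(3) sp sp] by simp
  have Lscale: "\<Lambda> (scale_tuple a f) = a * \<Lambda> f" for a f
    unfolding \<Lambda>_def using U.representation_scale[OF B2(3) sp] by simp
  have Lbasis: "\<Lambda> b = (if b = e then 1 else 0)" if "b \<in> B2" for b
    unfolding \<Lambda>_def using U.representation_basis[OF B2(3) that] by simp
  have Lsum: "\<Lambda> (\<Sum>x\<in>A. F x) = (\<Sum>x\<in>A. \<Lambda> (F x))" for A and F :: "'x \<Rightarrow> nat \<times> nat \<Rightarrow> real"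
    unfolding \<Lambda>_def using U.representation_sum[OF B2(3), of A F] sp by simp
  have "U.subspace {f. \<Lambda> f = 0}"
    by (rule U.subspaceI) (simp_all add: Ladd Lscale, simp add: \<Lambda>_def U.representation_zero)
  moreover have "BZ \<subseteq> {f. \<Lambda> f = 0}"
  proof
    fix b assume b: "b \<in> BZ"
    then have "b \<noteq> e" using e(2) BZ(1) by blast
    then show "b \<in> {f. \<Lambda> f = 0}" using Lbasis[of b] B2(1) b by auto
  qed
  ultimately have Z0: "Z \<subseteq> {f. \<Lambda> f = 0}" using spBZ U.span_minimal by blast
  define c where "c i j = \<Lambda> (ee i j)" for i j
  have c0: "c i0 j0 \<noteq> 0" unfolding c_def using Lbasis[of e] B2(1) ij(3) by simp
  have "(\<Sum>i<k. \<Sum>j<p. f (i,j) * c i j) = 0" if f: "f \<in> Z" "f \<in> Ukp k p" for f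
  proof -
    have "\<Lambda> f = \<Lambda> (\<Sum>ij\<in>{..<k} \<times> {..<p}. scale_tuple (f ij) (ee (fst ij) (snd ij)))"
      using Ukp_expand[OF f(2)] by metis
    also have "\<dots> = (\<Sum>ij\<in>{..<k} \<times> {..<p}. f ij * c (fst ij) (snd ij))"
      unfolding Lsum Lscale c_def ..
    also have "\<dots> = (\<Sum>i<k. \<Sum>j<p. f (i,j) * c i j)"
      by (simp add: sum.cartesian_product case_prod_beta)
    finally show ?thesis using Z0 f(1) by auto
  qed
  then show ?thesis using ij c0 by blast
qed


lemma blinfun_sum_zero:
  fixes S :: "'a::real_normed_vector \<Rightarrow>\<^sub>L 'b::real_normed_vector"
  assumes "\<And>i. i < length vs \<Longrightarrow> blinfun_apply S (vs ! i) = 0"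
  shows "blinfun_apply S (\<Sum>i<length vs. \<alpha> i *\<^sub>R vs ! i) = 0"
  using assms by (simp add: blinfun.sum_right blinfun.scaleR_right)

lemma (in fdb) dim_pos: "\<exists>v::'c. v \<noteq> 0 \<Longrightarrow> dim (UNIV::'c set) > 0"
proof -
  assume "\<exists>v::'c. v \<noteq> 0"
  then obtain v :: 'c where "v \<noteq> 0" by blast
  show ?thesis
  proof (rule ccontr)
    assume "\<not> dim (UNIV::'c set) > 0"
    then have "card B = 0" using dim_UNIV_card by simp
    then have "B = {}" using fB by simp
    then have "span B = {0}" by (simp add: real_vector.span_empty)
    then show False using sB \<open>v \<noteq> 0\<close> by auto
  qed
qed

lemma partB1:
  fixes vs :: "'a::real_normed_vector list" and ys :: "('b::real_normed_vector \<Rightarrow>\<^sub>L real) list"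
    and E :: "'a set" and G :: "'a \<Rightarrow> ('b \<Rightarrow>\<^sub>L real) set"
    and BX :: "'a set" and BY :: "'b set" and BD :: "('b \<Rightarrow>\<^sub>L real) set"
  assumes fX: "fdb BX" and fY: "fdb BY" and fD: "fdb BD"
    and vs: "distinct vs" "independent (set vs)" and ys: "distinct ys" "independent (set ys)"
    and ntX: "\<exists>v::'a. v \<noteq> 0" and ntY: "\<exists>v::'b. v \<noteq> 0"
    and dZ: "U.dim (U.span (Gen vs ys E G)) = dim (UNIV::'a set) * dim (UNIV::'b set)"
    and hS: "\<forall>x\<in>E. \<forall>g\<in>G x. blinfun_apply g (blinfun_apply S x) = 0"
  shows "S = 0"
proof -
  interpret X: fdb BX by fact
  interpret Y: fdb BY by fact
  interpret D: fdb BD by fact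
  define k where "k = length vs"
  define p where "p = length ys"
  define m where "m = dim (UNIV::'a set)"
  define n where "n = dim (UNIV::'b set)"
  have km: "k \<le> m" unfolding k_def m_def using X.list_le_dim vs by blast
  have pn: "p \<le> n" unfolding p_def n_def using D.list_le_dim[OF ys] Y.dual_dim_le by linarith
  have m0: "m > 0" unfolding m_def using X.dim_pos[OF ntX] .
  have n0: "n > 0" unfolding n_def using Y.dim_pos[OF ntY] .
  have "m * n \<le> k * p" using dim_Gen_le[of vs ys E G] dZ unfolding k_def p_def m_def n_def by simp
  then have kp: "k = m" "p = n" using mn_arith[OF km pn _ m0 n0] by auto
  have "EE k p \<subseteq> U.span (Gen vs ys E G)"
    by (rule full_dim_contains) (use span_Gen_sub[of vs ys E G] dZ kp in \<open>simp_all add: k_def p_def m_def n_def\<close>)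
  then have z: "blinfun_apply (ys!j) (blinfun_apply S (vs!i)) = 0" if "i < k" "j < p" for i j
  proof -
    have "ee i j \<in> U.span (Gen vs ys E G)" using \<open>EE k p \<subseteq> _\<close> that unfolding EE_def by auto
    from lam_vanish[OF hS this] show ?thesis using lam_ee[OF that] unfolding k_def p_def by simp
  qed
  have spv: "span (set vs) = UNIV" using X.list_spans vs kp unfolding k_def m_def by simp
  have spy: "span (set ys) = UNIV" using D.list_spans ys kp Y.dual_dim_le unfolding p_def n_def by simp
  have Sv: "blinfun_apply S (vs ! i) = 0" if "i < k" for i
  proof (rule ccontr)
    assume "blinfun_apply S (vs ! i) \<noteq> 0"
    then obtain g :: "'b \<Rightarrow>\<^sub>L real" where g: "blinfun_apply g (blinfun_apply S (vs ! i)) \<noteq> 0"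
      using Y.separates by blast
    obtain \<beta> where "g = (\<Sum>j<length ys. \<beta> j *\<^sub>R ys ! j)" using span_list_repr[OF ys(1)] spy by blast
    then have "blinfun_apply g (blinfun_apply S (vs ! i)) = 0"
      using z[OF that] unfolding p_def by (simp add: blinfun.sum_left blinfun.scaleR_left)
    then show False using g by simp
  qed
  show "S = 0"
  proof (rule blinfun_eqI)
    fix x :: 'a
    obtain \<alpha> where "x = (\<Sum>i<length vs. \<alpha> i *\<^sub>R vs ! i)" using span_list_repr[OF vs(1)] spv by blast
    then show "blinfun_apply S x = blinfun_apply 0 x" using blinfun_sum_zero[of vs S \<alpha>] Sv unfolding k_def by simp
  qed
qed

lemma (in fdb) proper_annih:
  fixes S :: "'c set"
  assumes ind: "independent S" and a: "a \<notin> span S"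
  shows "\<exists>f::'c \<Rightarrow>\<^sub>L real. blinfun_apply f a = 1 \<and> (\<forall>x\<in>span S. blinfun_apply f x = 0)"
proof -
  have ind2: "independent (insert a S)" using ind a by (intro real_vector.independent_insertI)
  obtain B2 where B2: "insert a S \<subseteq> B2" "B2 \<subseteq> UNIV" "independent B2" "UNIV \<subseteq> span B2"
    by (rule real_vector.maximal_independent_subset_extend[OF subset_UNIV ind2])
  have "Vector_Spaces.linear (*\<^sub>R) (*) (\<lambda>v. representation B2 v a)"
    by (rule real_vector.linear_representation) (use B2 in auto)
  then have lin: "linear (\<lambda>v. representation B2 v a)"
    unfolding linear_def real_scaleR_def [abs_def] .
  have bl: "bounded_linear (\<lambda>v. representation B2 v a)" by (rule lin_bounded[OF lin])
  define f where "f = Blinfun (\<lambda>v. representation B2 v a)"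
  have fapp: "blinfun_apply f v = representation B2 v a" for v
    unfolding f_def by (simp add: bounded_linear_Blinfun_apply[OF bl])
  have "blinfun_apply f a = 1" unfolding fapp using real_vector.representation_basis[OF B2(3), of a] B2(1) by simp
  moreover have "\<forall>x\<in>span S. blinfun_apply f x = 0"
  proof
    fix x assume x: "x \<in> span S"
    have z: "representation B2 s a = 0" if "s \<in> S" for s
    proof -
      have "s \<noteq> a" using that a real_vector.span_base by blast
      then show ?thesis using real_vector.representation_basis[OF B2(3), of s] B2(1) that by auto
    qed
    show "blinfun_apply f x = 0" unfolding fapp
      by (rule real_vector.linear_eq_0_on_span[OF lin z x]) 
  qed
  ultimately show ?thesis by blast
qed

lemma rank1_op:
  fixes f :: "'a::real_normed_vector \<Rightarrow>\<^sub>L real" and y0 :: "'b::real_normed_vector"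
  shows "\<exists>S::'a \<Rightarrow>\<^sub>L 'b. \<forall>x. blinfun_apply S x = blinfun_apply f x *\<^sub>R y0"
proof -
  have bl: "bounded_linear (\<lambda>x. blinfun_apply f x *\<^sub>R y0)"
    by (rule bounded_linear_compose[OF bounded_linear_scaleR_left blinfun.bounded_linear_right])
  show ?thesis by (intro exI[of _ "Blinfun (\<lambda>x. blinfun_apply f x *\<^sub>R y0)"]) (simp add: bounded_linear_Blinfun_apply[OF bl])
qed

lemma partB2:
  fixes vs :: "'a::real_normed_vector list" and ys :: "('b::real_normed_vector \<Rightarrow>\<^sub>L real) list"
    and E :: "'a set" and G :: "'a \<Rightarrow> ('b \<Rightarrow>\<^sub>L real) set"
    and BX :: "'a set" and BY :: "'b set" and BD :: "('b \<Rightarrow>\<^sub>L real) set"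
  assumes fX: "fdb BX" and fY: "fdb BY" and fD: "fdb BD"
    and vs: "distinct vs" "independent (set vs)" and ys: "distinct ys" "independent (set ys)"
    and ntX: "\<exists>v::'a. v \<noteq> 0" and ntY: "\<exists>v::'b. v \<noteq> 0"
    and Ev: "E \<subseteq> span (set vs)" and Gy: "\<forall>x\<in>E. G x \<subseteq> span (set ys)"
    and H: "\<forall>S::'a \<Rightarrow>\<^sub>L 'b. (\<forall>x\<in>E. \<forall>g\<in>G x. blinfun_apply g (blinfun_apply S x) = 0) \<longrightarrow> S = 0"
  shows "U.dim (U.span (Gen vs ys E G)) = dim (UNIV::'a set) * dim (UNIV::'b set)"
proof -
  interpret X: fdb BX by fact
  interpret Y: fdb BY by fact
  interpret D: fdb BD by fact
  define k where "k = length vs"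
  define p where "p = length ys"
  define m where "m = dim (UNIV::'a set)"
  define n where "n = dim (UNIV::'b set)"
  define Z where "Z = U.span (Gen vs ys E G)"
  have km: "k \<le> m" unfolding k_def m_def using X.list_le_dim vs by blast
  have pn: "p \<le> n" unfolding p_def n_def using D.list_le_dim[OF ys] Y.dual_dim_le by linarith
  obtain y0 :: 'b where y0: "y0 \<noteq> 0" using ntY by blast
  have "k = m"
  proof (rule ccontr)
    assume "k \<noteq> m"
    then have "k < m" using km by simp
    have "span (set vs) \<noteq> UNIV"
    proof
      assume "span (set vs) = UNIV"
      then have "dim (UNIV::'a set) = card (set vs)"
        using real_vector.dim_span_eq_card_independent[OF vs(2)] by simp
      then show False using \<open>k < m\<close> vs(1) unfolding k_def m_def by (simp add: distinct_card)
    qed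
    then obtain a where a: "a \<notin> span (set vs)" by blast
    obtain f :: "'a \<Rightarrow>\<^sub>L real" where f: "blinfun_apply f a = 1" "\<forall>x\<in>span (set vs). blinfun_apply f x = 0"
      using X.proper_annih[OF vs(2) a] by blast
    obtain S :: "'a \<Rightarrow>\<^sub>L 'b" where S: "\<forall>x. blinfun_apply S x = blinfun_apply f x *\<^sub>R y0"
      using rank1_op by blast
    have "\<forall>x\<in>E. \<forall>g\<in>G x. blinfun_apply g (blinfun_apply S x) = 0"
      using S f(2) Ev by auto
    then have "S = 0" using H by blast
    moreover have "blinfun_apply S a = y0" using S f(1) by simp
    ultimately show False using y0 by simp
  qed
  have "p = n"
  proof (rule ccontr)
    assume "p \<noteq> n"
    then have "p < n" using pn by simp
    obtain y1 :: 'b where y1: "y1 \<noteq> 0" "\<forall>j<length ys. blinfun_apply (ys!j) y1 = 0"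
      using Y.annihilator[of ys] \<open>p < n\<close> unfolding p_def n_def by blast
    obtain v :: 'a where "v \<noteq> 0" using ntX by blast
    then obtain f :: "'a \<Rightarrow>\<^sub>L real" where f: "blinfun_apply f v \<noteq> 0" using X.separates by blast
    obtain S :: "'a \<Rightarrow>\<^sub>L 'b" where S: "\<forall>x. blinfun_apply S x = blinfun_apply f x *\<^sub>R y1"
      using rank1_op by blast
    have ann: "blinfun_apply g y1 = 0" if gs: "g \<in> span (set ys)" for g
    proof -
      obtain \<beta> where "g = (\<Sum>j<length ys. \<beta> j *\<^sub>R ys ! j)" using span_list_repr[OF ys(1) gs] by blast
      then show ?thesis using y1(2) by (simp add: blinfun.sum_left blinfun.scaleR_left)
    qed
    have "\<forall>x\<in>E. \<forall>g\<in>G x. blinfun_apply g (blinfun_apply S x) = 0"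
      using S ann Gy by (auto simp: blinfun.scaleR_right)
    then have "S = 0" using H by blast
    moreover have "blinfun_apply S v \<noteq> 0" using S f y1 by simp
    ultimately show False by simp
  qed
  have subZ: "Z \<subseteq> U.span (EE k p)" unfolding Z_def k_def p_def by (rule span_Gen_sub)
  have "EE k p \<subseteq> Z"
  proof (rule ccontr)
    assume nsub: "\<not> EE k p \<subseteq> Z"
    obtain c i0 j0 where c: "i0 < k" "j0 < p" "c i0 j0 \<noteq> (0::real)"
      and cZ: "\<forall>f\<in>Z. f \<in> Ukp k p \<longrightarrow> (\<Sum>i<k. \<Sum>j<p. f (i,j) * c i j) = 0"
      using ext_functional[OF subZ _ nsub] unfolding Z_def by blast
    have spv: "span (set vs) = UNIV" using X.list_spans vs \<open>k = m\<close> unfolding k_def m_def by simp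
    have spy: "span (set ys) = UNIV" using D.list_spans ys \<open>p = n\<close> Y.dual_dim_le unfolding p_def n_def by simp
    have "\<forall>j. \<exists>y. j < p \<longrightarrow> (\<forall>l<p. blinfun_apply (ys!l) y = (if l = j then 1 else 0))"
      using Y.dual_vectors[OF ys(1) spy] \<open>p = n\<close> unfolding p_def n_def by blast
    then obtain yv where yv: "\<And>j l. j < p \<Longrightarrow> l < p \<Longrightarrow> blinfun_apply (ys!l) (yv j) = (if l = j then 1 else 0)"
      by metis
    define rv where "rv i x = representation (set vs) x (vs!i)" for i x
    have "Vector_Spaces.linear (*\<^sub>R) (*) (\<lambda>x. representation (set vs) x (vs!i))" for i
      by (rule real_vector.linear_representation) (use vs spv in auto)
    then have linr: "linear (\<lambda>x. rv i x)" for i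
      unfolding linear_def real_scaleR_def [abs_def] rv_def .
    have blr: "bounded_linear (\<lambda>x. rv i x)" for i by (rule X.lin_bounded[OF linr])
    have rvb: "rv i (vs!i') = (if i = i' then 1 else 0)" if "i < k" "i' < k" for i i'
      unfolding rv_def using real_vector.representation_basis[OF vs(2), of "vs!i'"] that vs(1)
      by (auto simp: k_def nth_eq_iff_index_eq)
    define F where "F x = (\<Sum>i<k. \<Sum>j<p. (rv i x * c i j) *\<^sub>R yv j)" for x
    have blF: "bounded_linear F" unfolding F_def
      by (intro bounded_linear_sum bounded_linear_compose[OF bounded_linear_scaleR_left]
          bounded_linear_mult_const blr)
    define S where "S = Blinfun F"
    have Sapp: "blinfun_apply S x = F x" for x unfolding S_def by (simp add: bounded_linear_Blinfun_apply[OF blF])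
    have Sval: "blinfun_apply (ys!l) (blinfun_apply S (vs!i')) = c i' l" if "i' < k" "l < p" for i' l
    proof -
      have "blinfun_apply (ys!l) (blinfun_apply S (vs!i'))
          = (\<Sum>i<k. \<Sum>j<p. rv i (vs!i') * c i j * blinfun_apply (ys!l) (yv j))"
        unfolding Sapp F_def by (simp add: blinfun.sum_right blinfun.scaleR_right)
      also have "\<dots> = (\<Sum>i<k. \<Sum>j<p. if j = l then (if i = i' then c i j else 0) else 0)"
        using that by (intro sum.cong refl) (simp add: rvb yv)
      also have "\<dots> = (\<Sum>i<k. if i = i' then c i l else 0)"
      proof (intro sum.cong refl)
        fix i
        show "(\<Sum>j<p. if j = l then (if i = i' then c i j else 0) else 0) = (if i = i' then c i l else 0)"
          using that(2) by (simp add: sum.delta)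
      qed
      also have "\<dots> = c i' l" using that(1) by (simp add: sum.delta)
      finally show ?thesis .
    qed
    have "S = 0"
    proof -
      have "\<forall>x\<in>E. \<forall>g\<in>G x. blinfun_apply g (blinfun_apply S x) = 0"
      proof (intro ballI)
        fix x g assume x: "x \<in> E" and g: "g \<in> G x"
        obtain \<alpha> where \<alpha>: "x = (\<Sum>i<length vs. \<alpha> i *\<^sub>R vs ! i)" using span_list_repr[OF vs(1)] spv by blast
        obtain \<beta> where \<beta>: "g = (\<Sum>j<length ys. \<beta> j *\<^sub>R ys ! j)" using span_list_repr[OF ys(1)] spy by blast
        have "tensor_tuple (length vs) (length ys) \<alpha> \<beta> \<in> Gen vs ys E G"
          unfolding Gen_def using x g \<alpha> \<beta> by auto
        then have tZ: "tensor_tuple k p \<alpha> \<beta> \<in> Z" unfolding Z_def k_def p_def by (rule U.span_base)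
        have "blinfun_apply g (blinfun_apply S x)
            = (\<Sum>i<k. \<Sum>j<p. tensor_tuple k p \<alpha> \<beta> (i,j) * blinfun_apply (ys!j) (blinfun_apply S (vs!i)))"
          using pairing[of vs ys \<alpha> \<beta> S] \<alpha> \<beta> unfolding k_def p_def by simp
        also have "\<dots> = (\<Sum>i<k. \<Sum>j<p. tensor_tuple k p \<alpha> \<beta> (i,j) * c i j)"
          by (intro sum.cong refl) (simp add: Sval)
        also have "\<dots> = 0" using cZ tZ tensor_Ukp by blast
        finally show "blinfun_apply g (blinfun_apply S x) = 0" .
      qed
      then show ?thesis using H by blast
    qed
    then have "c i0 j0 = 0" using Sval[OF c(1,2)] by simp
    then show False using c(3) by simp
  qed
  then have "U.span (EE k p) \<subseteq> Z" unfolding Z_def by (intro U.span_minimal) simp_all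
  then have "Z = U.span (EE k p)" using subZ by blast
  then have "U.dim Z = k * p" using dim_span_EE by simp
  then show ?thesis unfolding Z_def using \<open>k = m\<close> \<open>p = n\<close> unfolding m_def n_def by simp
qed


lemma N_imp_extreme:
  fixes T :: "'a::real_normed_vector \<Rightarrow>\<^sub>L 'b::real_normed_vector"
  assumes nT: "norm T = 1"
    and H: "\<forall>S::'a \<Rightarrow>\<^sub>L 'b. (\<forall>x\<in>norm_attain T \<inter> ext_ball. \<forall>g\<in>{f. f extreme_point_of supp_fun (blinfun_apply T x)}.
              blinfun_apply g (blinfun_apply S x) = 0) \<longrightarrow> S = 0"
  shows "extreme_contraction T"
  unfolding extreme_contraction_def extreme_point_of_def
proof (intro conjI ballI notI)
  show "T \<in> cball 0 1" using nT by simp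
  fix A B assume A: "A \<in> cball (0::'a \<Rightarrow>\<^sub>L 'b) 1" and B: "B \<in> cball (0::'a \<Rightarrow>\<^sub>L 'b) 1" and "T \<in> open_segment A B"
  then obtain u where AB: "A \<noteq> B" and u: "0 < u" "u < 1" and Tu: "T = (1 - u) *\<^sub>R A + u *\<^sub>R B"
    unfolding in_segment by blast
  have "\<forall>x\<in>norm_attain T \<inter> ext_ball. \<forall>g\<in>{f. f extreme_point_of supp_fun (blinfun_apply T x)}.
              blinfun_apply g (blinfun_apply (A - B) x) = 0"
  proof (intro ballI)
    fix x g assume x: "x \<in> norm_attain T \<inter> ext_ball" and g: "g \<in> {f. f extreme_point_of supp_fun (blinfun_apply T x)}"
    have nx: "norm x = 1" using x unfolding norm_attain_def by simp
    have gJ: "g \<in> supp_fun (blinfun_apply T x)" using g unfolding extreme_point_of_def by simp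
    then have ng: "norm g = 1" and gT: "blinfun_apply g (blinfun_apply T x) = 1" unfolding supp_fun_def by auto
    have bnd: "blinfun_apply g (blinfun_apply C x) \<le> 1" if "norm C \<le> 1" for C :: "'a \<Rightarrow>\<^sub>L 'b"
    proof -
      have "blinfun_apply g (blinfun_apply C x) \<le> norm g * norm (blinfun_apply C x)"
        using norm_blinfun[of g "blinfun_apply C x"] by simp
      also have "\<dots> \<le> 1 * (norm C * norm x)"
        using ng norm_blinfun[of C x] by simp
      also have "\<dots> \<le> 1" using that nx by simp
      finally show ?thesis .
    qed
    have ga: "blinfun_apply g (blinfun_apply A x) \<le> 1" using bnd A by simp
    have gb: "blinfun_apply g (blinfun_apply B x) \<le> 1" using bnd B by simp
    have "1 = (1 - u) * blinfun_apply g (blinfun_apply A x) + u * blinfun_apply g (blinfun_apply B x)"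
      using gT unfolding Tu by (simp add: blinfun.add_left blinfun.scaleR_left blinfun.add_right blinfun.scaleR_right)
    then have h: "(1-u) * (1 - blinfun_apply g (blinfun_apply A x)) + u * (1 - blinfun_apply g (blinfun_apply B x)) = 0"
      by (simp add: algebra_simps)
    have h1: "(1-u) * (1 - blinfun_apply g (blinfun_apply A x)) \<ge> 0" "u * (1 - blinfun_apply g (blinfun_apply B x)) \<ge> 0"
      using ga gb u by simp_all
    then have "(1-u) * (1 - blinfun_apply g (blinfun_apply A x)) = 0" "u * (1 - blinfun_apply g (blinfun_apply B x)) = 0"
      using h by linarith+
    then have "blinfun_apply g (blinfun_apply A x) = 1" "blinfun_apply g (blinfun_apply B x) = 1" using u by simp_all
    then show "blinfun_apply g (blinfun_apply (A - B) x) = 0" by (simp add: blinfun.diff_left blinfun.diff_right)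
  qed
  then have "A - B = 0" using H by blast
  then show False using AB by simp
qed

lemma basis_list_exists:
  assumes "fin_dim_space TYPE('v::real_normed_vector)"
  shows "\<exists>vs. is_basis_list vs (span (A::'v set))"
proof -
  obtain B0 :: "'v set" where "fdb B0" using exists_fdb[OF assms] by blast
  interpret F: fdb B0 by fact
  obtain B :: "'v set" where B: "B \<subseteq> span A" "independent B" "span A \<subseteq> span B" "card B = dim (span A)"
    by (rule real_vector.basis_exists)
  have "finite B" using real_vector.independent_span_bound[OF F.fB B(2)] F.sB by auto
  then obtain vs where vs: "set vs = B" "distinct vs" using finite_distinct_list by blast
  have "span B \<subseteq> span A" using B(1) by (metis real_vector.span_mono real_vector.span_span)
  then have "span B = span A" using B(3) by blast
  then show ?thesis unfolding is_basis_list_def using vs B(2) by auto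
qed


theorem mainTheorem8:
  fixes T :: "'a::real_normed_vector \<Rightarrow>\<^sub>L 'b::real_normed_vector"
    and m n :: nat
  assumes "fin_dim_space TYPE('a)" and "fin_dim_space TYPE('b)"
    and "polyhedral TYPE('a)" and "polyhedral TYPE('b)"
    and "dim (UNIV :: 'a set) = m" and "dim (UNIV :: 'b set) = n"
    and "norm T = 1"
  shows "extreme_contraction T \<longleftrightarrow> smooth_index (norm_attain T) T = m * n"
proof -
  obtain BX :: "'a set" where fX: "fdb BX" using exists_fdb[OF assms(1)] by blast
  obtain BY :: "'b set" where fY: "fdb BY" using exists_fdb[OF assms(2)] by blast
  interpret X: fdb BX by fact
  interpret Y: fdb BY by fact
  obtain BD :: "('b \<Rightarrow>\<^sub>L real) set" where fD: "fdb BD" using exists_fdb[OF Y.dual_fin] by blast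
  have finX: "finite (ext_ball :: 'a set)" using assms(3) unfolding polyhedral_def .
  have finY: "finite (ext_ball :: 'b set)" using assms(4) unfolding polyhedral_def .
  define R where "R = norm_attain T"
  define E where "E = R \<inter> ext_ball"
  define G where "G x = {f. f extreme_point_of supp_fun (blinfun_apply T x)}" for x
  define vs where "vs = (SOME vs. is_basis_list vs (span R))"
  define ys where "ys = (SOME ys. is_basis_list ys (W_space R T))"
  have vsb: "is_basis_list vs (span R)"
    unfolding vs_def by (rule someI_ex) (rule basis_list_exists[OF assms(1)])
  have ysb: "is_basis_list ys (W_space R T)"
    unfolding ys_def W_space_def by (rule someI_ex) (rule basis_list_exists[OF Y.dual_fin])
  have vs: "distinct vs" "independent (set vs)" "span (set vs) = span R"
    using vsb unfolding is_basis_list_def by auto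
  have ys: "distinct ys" "independent (set ys)" "span (set ys) = W_space R T"
    using ysb unfolding is_basis_list_def by auto
  have si: "smooth_index R T = U.dim (U.span (Gen vs ys E G))"
    unfolding smooth_index_def Let_def vs_def[symmetric] ys_def[symmetric] Z_space_Gen E_def G_def by simp
  have Ev: "E \<subseteq> span (set vs)" unfolding E_def vs(3) using real_vector.span_superset by blast
  have Gy: "\<forall>x\<in>E. G x \<subseteq> span (set ys)"
  proof (intro ballI subsetI)
    fix x f assume x: "x \<in> E" and f: "f \<in> G x"
    then have "f \<in> supp_fun (blinfun_apply T x)" unfolding G_def extreme_point_of_def by simp
    then have "f \<in> (\<Union>v \<in> R \<inter> ext_ball. supp_fun (blinfun_apply T v))" using x unfolding E_def by blast
    then show "f \<in> span (set ys)" unfolding ys(3) W_space_def by (rule real_vector.span_base)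
  qed
  have "T \<noteq> 0" using assms(7) by auto
  then obtain v where Tv: "blinfun_apply T v \<noteq> 0" by (metis blinfun_eqI zero_blinfun.rep_eq)
  then have ntX: "\<exists>v::'a. v \<noteq> 0" by (metis blinfun.zero_right)
  have ntY: "\<exists>v::'b. v \<noteq> 0" using Tv by blast
  have B: "U.dim (U.span (Gen vs ys E G)) = m * n \<longleftrightarrow>
      (\<forall>S::'a \<Rightarrow>\<^sub>L 'b. (\<forall>x\<in>E. \<forall>g\<in>G x. blinfun_apply g (blinfun_apply S x) = 0) \<longrightarrow> S = 0)"
  proof
    assume "U.dim (U.span (Gen vs ys E G)) = m * n"
    then show "\<forall>S::'a \<Rightarrow>\<^sub>L 'b. (\<forall>x\<in>E. \<forall>g\<in>G x. blinfun_apply g (blinfun_apply S x) = 0) \<longrightarrow> S = 0"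
      using partB1[OF fX fY fD vs(1,2) ys(1,2) ntX ntY] assms(5,6) by blast
  next
    assume "\<forall>S::'a \<Rightarrow>\<^sub>L 'b. (\<forall>x\<in>E. \<forall>g\<in>G x. blinfun_apply g (blinfun_apply S x) = 0) \<longrightarrow> S = 0"
    then show "U.dim (U.span (Gen vs ys E G)) = m * n"
      using partB2[OF fX fY fD vs(1,2) ys(1,2) ntX ntY Ev Gy] assms(5,6) by blast
  qed
  have A: "extreme_contraction T \<longleftrightarrow>
      (\<forall>S::'a \<Rightarrow>\<^sub>L 'b. (\<forall>x\<in>E. \<forall>g\<in>G x. blinfun_apply g (blinfun_apply S x) = 0) \<longrightarrow> S = 0)"
  proof
    assume ex: "extreme_contraction T"
    show "\<forall>S::'a \<Rightarrow>\<^sub>L 'b. (\<forall>x\<in>E. \<forall>g\<in>G x. blinfun_apply g (blinfun_apply S x) = 0) \<longrightarrow> S = 0"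
    proof (intro allI impI)
      fix S :: "'a \<Rightarrow>\<^sub>L 'b"
      assume "\<forall>x\<in>E. \<forall>g\<in>G x. blinfun_apply g (blinfun_apply S x) = 0"
      then have hS: "\<forall>x\<in>norm_attain T \<inter> ext_ball. \<forall>g. g extreme_point_of supp_fun (blinfun_apply T x) \<longrightarrow>
               blinfun_apply g (blinfun_apply S x) = 0" unfolding E_def G_def R_def by blast
      show "S = 0" by (rule extreme_imp_N[OF fX fY finX finY assms(7) ex hS])
    qed
  next
    assume "\<forall>S::'a \<Rightarrow>\<^sub>L 'b. (\<forall>x\<in>E. \<forall>g\<in>G x. blinfun_apply g (blinfun_apply S x) = 0) \<longrightarrow> S = 0"
    then show "extreme_contraction T"
      by (intro N_imp_extreme[OF assms(7)]) (simp add: E_def G_def R_def)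
  qed
  show ?thesis using A B si unfolding R_def by simp
qed


end
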